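(* Let $Q$ be a $3$-divisible Moufang loop and let $X$ be a $2$-divisible normal subloop of $Q$ that is a commutative group. Then the congruence $\{aX:a\in Q\}$ on $Q$ induced by $X$ is an abelian congruence of $Q$.
   Context: A loop is a magma $(Q,\cdot,1)$ with identity in which all left and right translations are bijections; it is Moufang if it satisfies $xy\cdot zx=(x\cdot yz)x$ for all $x,y,z$ (Moufang loops are power associative). A power associative loop is $d$-divisible if the map $x\mapsto x^d$ is surjective. A subloop is normal if it is the kernel of a loop homomorphism. For a normal subloop $X$ of $Q$, the induced congruence has classes $aX$; it is abelian if its Freese–McKenzie commutator with itself is trivial; equivalently, $Q$ is isomorphic to an abelian extension of $X$ by $Q/X$: a loop on $Q/X\times X$ with $(r,x)(s,y)=(rs,\varphi_{r,s}(x)+\psi_{r,s}(y)+\theta_{r,s})$, $\varphi_{r,s},\psi_{r,s}\in\mathrm{Aut}(X)$, $\theta_{r,s}\in X$, $\varphi_{r,1}=\mathrm{id}=\psi_{1,r}$, $\theta_{1,r}=0=\theta_{r,1}$. *)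

theory Defs
  imports Main
begin

definition is_loop :: "('a \<Rightarrow> 'a \<Rightarrow> 'a) \<Rightarrow> 'a \<Rightarrow> bool" where
  "is_loop m e \<longleftrightarrow> (\<forall>x. m e x = x \<and> m x e = x)
     \<and> (\<forall>a. bij (\<lambda>x. m a x)) \<and> (\<forall>a. bij (\<lambda>x. m x a))"

definition is_loop_on :: "'b set \<Rightarrow> ('b \<Rightarrow> 'b \<Rightarrow> 'b) \<Rightarrow> 'b \<Rightarrow> bool" where
  "is_loop_on L m e \<longleftrightarrow> e \<in> L \<and> (\<forall>x\<in>L. \<forall>y\<in>L. m x y \<in> L)
     \<and> (\<forall>x\<in>L. m e x = x \<and> m x e = x)
     \<and> (\<forall>a\<in>L. bij_betw (\<lambda>x. m a x) L L) \<and> (\<forall>a\<in>L. bij_betw (\<lambda>x. m x a) L L)"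

definition moufang :: "('a \<Rightarrow> 'a \<Rightarrow> 'a) \<Rightarrow> 'a \<Rightarrow> bool" where
  "moufang m e \<longleftrightarrow> is_loop m e \<and>
     (\<forall>x y z. m (m x y) (m z x) = m (m x (m y z)) x)"

definition ldiv :: "('a \<Rightarrow> 'a \<Rightarrow> 'a) \<Rightarrow> 'a \<Rightarrow> 'a \<Rightarrow> 'a" where
  "ldiv m a b = (THE x. m a x = b)"

definition rdiv :: "('a \<Rightarrow> 'a \<Rightarrow> 'a) \<Rightarrow> 'a \<Rightarrow> 'a \<Rightarrow> 'a" where
  "rdiv m b a = (THE x. m x a = b)"

text \<open>Powers x^n = x (x (... x)); in a power associative loop the bracketing is irrelevant.\<close>

primrec lpow :: "('a \<Rightarrow> 'a \<Rightarrow> 'a) \<Rightarrow> 'a \<Rightarrow> 'a \<Rightarrow> nat \<Rightarrow> 'a" where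
  "lpow m e x 0 = e"
| "lpow m e x (Suc n) = m x (lpow m e x n)"

definition divisible :: "('a \<Rightarrow> 'a \<Rightarrow> 'a) \<Rightarrow> 'a \<Rightarrow> nat \<Rightarrow> bool" where
  "divisible m e d \<longleftrightarrow> (\<forall>y. \<exists>x. lpow m e x d = y)"

text \<open>Normal subloop: kernel of a loop homomorphism. Every homomorphic image of Q
  has cardinality at most that of Q, so it suffices to consider target loops
  carried by a subset of the type 'a.\<close>

definition normal_subloop :: "('a \<Rightarrow> 'a \<Rightarrow> 'a) \<Rightarrow> 'a \<Rightarrow> 'a set \<Rightarrow> bool" where
  "normal_subloop m e X \<longleftrightarrow>
     (\<exists>(L::'a set) m' e' f. is_loop_on L m' e' \<and> (\<forall>x. f x \<in> L)
        \<and> (\<forall>x y. f (m x y) = m' (f x) (f y))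
        \<and> X = {x. f x = e'})"

definition comm_group_sub :: "('a \<Rightarrow> 'a \<Rightarrow> 'a) \<Rightarrow> 'a set \<Rightarrow> bool" where
  "comm_group_sub m X \<longleftrightarrow> (\<forall>x\<in>X. \<forall>y\<in>X. m x y = m y x)
     \<and> (\<forall>x\<in>X. \<forall>y\<in>X. \<forall>z\<in>X. m (m x y) z = m x (m y z))"

definition divisible_on :: "('a \<Rightarrow> 'a \<Rightarrow> 'a) \<Rightarrow> 'a \<Rightarrow> 'a set \<Rightarrow> nat \<Rightarrow> bool" where
  "divisible_on m e X d \<longleftrightarrow> (\<forall>y\<in>X. \<exists>x\<in>X. lpow m e x d = y)"

definition induced_cong :: "('a \<Rightarrow> 'a \<Rightarrow> 'a) \<Rightarrow> 'a set \<Rightarrow> ('a \<times> 'a) set" where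
  "induced_cong m X = {(a, b). \<exists>x\<in>X. b = m a x}"

datatype 'v lterm = LVar 'v | LOne | LMul "'v lterm" "'v lterm"
  | LLdiv "'v lterm" "'v lterm" | LRdiv "'v lterm" "'v lterm"

primrec leval :: "('a \<Rightarrow> 'a \<Rightarrow> 'a) \<Rightarrow> 'a \<Rightarrow> ('v \<Rightarrow> 'a) \<Rightarrow> 'v lterm \<Rightarrow> 'a" where
  "leval m e \<rho> (LVar v) = \<rho> v"
| "leval m e \<rho> LOne = e"
| "leval m e \<rho> (LMul s t) = m (leval m e \<rho> s) (leval m e \<rho> t)"
| "leval m e \<rho> (LLdiv s t) = ldiv m (leval m e \<rho> s) (leval m e \<rho> t)"
| "leval m e \<rho> (LRdiv s t) = rdiv m (leval m e \<rho> s) (leval m e \<rho> t)"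

text \<open>Freese--McKenzie: [\<alpha>,\<alpha>] is the least \<delta> with C(\<alpha>,\<alpha>;\<delta>) (term condition).
  Thus [\<alpha>,\<alpha>] = 0 iff C(\<alpha>,\<alpha>;0): for every term t(x,y) and tuples a \<alpha> b, c \<alpha> d,
  t(a,c) = t(a,d) implies t(b,c) = t(b,d). Variables Inl i are the x's, Inr i the y's.\<close>

definition abelian_cong :: "('a \<Rightarrow> 'a \<Rightarrow> 'a) \<Rightarrow> 'a \<Rightarrow> ('a \<times> 'a) set \<Rightarrow> bool" where
  "abelian_cong m e \<alpha> \<longleftrightarrow>
     (\<forall>(t::(nat + nat) lterm) a b c d.
        (\<forall>i. (a i, b i) \<in> \<alpha>) \<longrightarrow> (\<forall>i. (c i, d i) \<in> \<alpha>) \<longrightarrow>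
        leval m e (case_sum a c) t = leval m e (case_sum a d) t \<longrightarrow>
        leval m e (case_sum b c) t = leval m e (case_sum b d) t)"

end

theory Submission
  imports Defs
begin



locale mloop =
  fixes m :: "'a \<Rightarrow> 'a \<Rightarrow> 'a" and e :: 'a
  assumes mouf: "moufang m e"
begin

abbreviation ld where "ld \<equiv> ldiv m"
abbreviation rd where "rd \<equiv> rdiv m"

lemma isloop: "is_loop m e" using mouf unfolding moufang_def by blast
lemma lid: "m e x = x" using isloop unfolding is_loop_def by blast
lemma rid: "m x e = x" using isloop unfolding is_loop_def by blast
lemma bijL: "bij (\<lambda>x. m a x)" using isloop unfolding is_loop_def by blast
lemma bijR: "bij (\<lambda>x. m x a)" using isloop unfolding is_loop_def by blast
lemma mou: "m (m x y) (m z x) = m (m x (m y z)) x" using mouf unfolding moufang_def by blast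

lemma lcancel: "m a x = m a y \<Longrightarrow> x = y"
  using bijL[of a] unfolding bij_def inj_def by blast
lemma rcancel: "m x a = m y a \<Longrightarrow> x = y"
  using bijR[of a] unfolding bij_def inj_def by blast
lemma lex: "\<exists>x. m a x = b" using bijL[of a] unfolding bij_def surj_def by metis
lemma rex: "\<exists>x. m x a = b" using bijR[of a] unfolding bij_def surj_def by metis

lemma ld1: "m a (ld a b) = b"
proof -
  obtain x where "m a x = b" using lex by blast
  then have "\<exists>!x. m a x = b" using lcancel by blast
  then show ?thesis unfolding ldiv_def by (rule theI')
qed
lemma ld2: "ld a (m a b) = b" using ld1 lcancel by metis
lemma rd1: "m (rd b a) a = b"
proof -
  obtain x where "m x a = b" using rex by blast
  then have "\<exists>!x. m x a = b" using rcancel by blast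
  then show ?thesis unfolding rdiv_def by (rule theI')
qed
lemma rd2: "rd (m b a) a = b" using rd1 rcancel by metis
lemma ld_self: "ld a a = e" using ld2[of a e] rid by simp
lemma rd_self: "rd a a = e" using rd2[of e a] lid by simp

lemma flex: "m a (m b a) = m (m a b) a"
proof -
  have c_0_9: "\<And>X1 X2. (m (m X1 X2) X1) = (m X1 (m X2 X1))" by (metis lid mou rid)
  have c_0_8p: "(m a (m b a)) = (m (m a b) a)" by (metis c_0_9)
  have c_0_4p: "(m a (m b a)) = (m (m a b) a)" by (metis c_0_8p)
  then show ?thesis by metis
qed

lemma lalt: "m a (m a b) = m (m a a) b"
proof -
  have c_0_9: "\<And>X1 X2. (m (m X1 X2) X1) = (m X1 (m X2 X1))" by (metis lid mou rid)
  have c_0_11: "\<And>X1 X2 X3. (m (m X1 X2) (m X3 X1)) = (m X1 (m (m X2 X3) X1))" by (metis c_0_9 mou)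
  have c_0_13: "\<And>X1 X2. (rd (m X1 (m X2 X1)) X1) = (m X1 X2)" by (metis c_0_9 rd2)
  have c_0_15: "\<And>X1 X2 X3. (m X1 (m (m X2 (rd X3 X1)) X1)) = (m (m X1 X2) X3)" by (metis c_0_11 rd1)
  have c_0_16: "\<And>X1 X2. (m X1 (rd X2 X1)) = (rd (m X1 X2) X1)" by (metis c_0_13 rd1)
  have c_0_18: "\<And>X1 X2. (m (m X1 X1) X2) = (m X1 (m X1 X2))" by (metis c_0_15 c_0_16 rd1)
  have c_0_17p: "(m a (m a b)) = (m (m a a) b)" by (metis c_0_18)
  have c_0_14p: "(m a (m a b)) = (m (m a a) b)" by (metis c_0_17p)
  then show ?thesis by metis
qed

lemma ralt: "m (m b a) a = m b (m a a)"
proof -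
  have c_0_11: "\<And>X1 X2. (m (m X1 X2) X1) = (m X1 (m X2 X1))" by (metis lid mou rid)
  have c_0_13: "\<And>X1 X2 X3. (m (m X1 X2) (m X3 X1)) = (m X1 (m (m X2 X3) X1))" by (metis c_0_11 mou)
  have c_0_15: "\<And>X1 X2. (rd (m X1 (m X2 X1)) X1) = (m X1 X2)" by (metis c_0_11 rd2)
  have c_0_17: "\<And>X1 X2 X3. (m X1 (m (m X2 (rd X3 X1)) X1)) = (m (m X1 X2) X3)" by (metis c_0_13 rd1)
  have c_0_18: "\<And>X1 X2. (m X1 (rd X2 X1)) = (rd (m X1 X2) X1)" by (metis c_0_15 rd1)
  have c_0_20: "\<And>X1 X2. (m X1 (m (ld X1 X2) X1)) = (m X2 X1)" by (metis c_0_11 ld1)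
  have c_0_21: "\<And>X1 X2. (m (m X1 X1) X2) = (m X1 (m X1 X2))" by (metis c_0_17 c_0_18 rd1)
  have c_0_23: "\<And>X1 X2. (m (ld X1 X2) X1) = (ld X1 (m X2 X1))" by (metis c_0_20 ld2)
  have c_0_24: "\<And>X1 X2. (ld (m X1 X1) (m X1 (m X1 X2))) = X2" by (metis c_0_21 ld2)
  have c_0_26: "\<And>X1 X2. (m (m X1 X2) X2) = (m X1 (m X2 X2))" by (metis c_0_11 c_0_13 c_0_23 c_0_24)
  have c_0_25p: "(m (m b a) a) = (m b (m a a))" by (metis c_0_26)
  have c_0_22p: "(m (m b a) a) = (m b (m a a))" by (metis c_0_25p)
  then show ?thesis by metis
qed

lemma lmouf: "m (m (m a b) a) c = m a (m b (m a c))"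
proof -
  have c_0_12: "\<And>X1 X2. (m (m X1 X2) X1) = (m X1 (m X2 X1))" by (metis lid mou rid)
  have c_0_13: "\<And>X1 X2. (rd (m X1 (m X2 X1)) X1) = (m X1 X2)" by (metis c_0_12 rd2)
  have c_0_16: "\<And>X1 X2. (m X1 (rd X2 X1)) = (rd (m X1 X2) X1)" by (metis c_0_13 rd1)
  have c_0_17: "\<And>X1 X2 X3. (m (m X1 X2) (m X3 X1)) = (m X1 (m (m X2 X3) X1))" by (metis c_0_12 mou)
  have c_0_18: "\<And>X1 X2. (ld X1 (rd (m X1 X2) X1)) = (rd X2 X1)" by (metis c_0_16 ld2)
  have c_0_19: "\<And>X1. (rd X1 X1) = e" by (metis lid rd2)
  have c_0_20: "\<And>X1 X2 X3. (m X1 (m (m X2 (rd X3 X1)) X1)) = (m (m X1 X2) X3)" by (metis c_0_17 rd1)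
  have c_0_21: "\<And>X1. (rd e X1) = (ld X1 e)" by (metis c_0_18 c_0_19 rid)
  have c_0_22: "\<And>X1 X2. (m X1 (m (m X2 (ld X1 e)) X1)) = (m X1 X2)" by (metis c_0_20 c_0_21 rid)
  have c_0_23: "\<And>X1 X2. (m (m X1 (ld X2 e)) X2) = X1" by (metis c_0_22 ld2)
  have c_0_25: "\<And>X1 X2. (ld (m X1 (ld X2 e)) X1) = X2" by (metis c_0_23 ld2)
  have c_0_26: "\<And>X1 X2. (m (m X1 X1) X2) = (m X1 (m X1 X2))" by (metis c_0_16 c_0_20 rd1)
  have c_0_27: "\<And>X1 X2. (rd X1 (ld X2 X1)) = X2" by (metis ld1 rd2)
  have c_0_28: "\<And>X1 X2. (ld (m X1 X2) X1) = (ld X2 e)" by (metis c_0_25 lid)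
  have c_0_29: "\<And>X1 X2. (m X1 (m (ld X1 X2) X1)) = (m X2 X1)" by (metis c_0_12 ld1)
  have c_0_30: "\<And>X1 X2. (rd (m X1 (m X1 X2)) X2) = (m X1 X1)" by (metis c_0_26 rd2)
  have c_0_31: "\<And>X1 X2. (rd X1 (ld X2 e)) = (m X1 X2)" by (metis c_0_27 c_0_28)
  have c_0_32: "\<And>X1 X2. (m X1 (ld X2 e)) = (rd X1 X2)" by (metis c_0_23 rd2)
  have c_0_33: "\<And>X1 X2. (m (ld X1 X2) X1) = (ld X1 (m X2 X1))" by (metis c_0_29 ld2)
  have c_0_34: "\<And>X1 X2. (ld (m X1 X1) (m X1 (m X1 X2))) = X2" by (metis c_0_26 ld2)
  have c_0_35: "\<And>X1 X2. (m (m X1 (rd X1 X2)) X2) = (m X1 X1)" by (metis c_0_30 c_0_31 c_0_32)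
  have c_0_36: "\<And>X1 X2. (m (m X1 X2) (m X1 X2)) = (m X1 (m X2 (m X1 X2)))" by (metis c_0_13 c_0_17 c_0_30)
  have c_0_37: "\<And>X1 X2. (m (m X1 X2) X2) = (m X1 (m X2 X2))" by (metis c_0_12 c_0_17 c_0_33 c_0_34)
  have c_0_38: "\<And>X1 X2. (m (m X1 (m X2 X1)) X2) = (m X1 (m X2 (m X1 X2)))" by (metis c_0_12 c_0_35 c_0_36 rd2)
  have c_0_39: "\<And>X1 X2 X3. (m (m X1 X2) (m X3 (m X1 (m X3 X1)))) = (m X1 (m (m (m (m X2 X3) X1) X3) X1))" by (metis c_0_17 c_0_36 c_0_37)
  have c_0_40: "\<And>X1 X2 X3. (m X1 (m (m (m (m X2 X3) X1) X3) X1)) = (m X1 (m (m X2 (m X3 (m X1 X3))) X1))" by (metis c_0_17 c_0_38 c_0_39)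
  have c_0_42: "\<And>X1 X2 X3. (m (m (m (m X1 X2) X3) X2) X3) = (m (m X1 (m X2 (m X3 X2))) X3)" by (metis c_0_40 ld2)
  have c_0_44: "\<And>X1 X2 X3. (m (m (m X1 X2) X3) X2) = (m X1 (m X2 (m X3 X2)))" by (metis c_0_42 rd2)
  have c_0_46: "\<And>X1 X2 X3. (m (m X1 (m X2 X1)) X3) = (m X1 (m X2 (m X1 X3)))" by (metis c_0_20 c_0_44 rd1)
  have c_0_45p: "(m (m a (m b a)) c) = (m a (m b (m a c)))" by (metis c_0_46)
  have c_0_43p: "(m (m (m a b) a) c) = (m a (m b (m a c)))" by (metis c_0_45p c_0_12)
  have c_0_41p: "(m (m (m a b) a) c) = (m a (m b (m a c)))" by (metis c_0_43p)
  then show ?thesis by metis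
qed

lemma rmouf: "m (m (m c a) b) a = m c (m a (m b a))"
proof -
  have c_0_12: "\<And>X1 X2. (m (m X1 X2) X1) = (m X1 (m X2 X1))" by (metis lid mou rid)
  have c_0_13: "\<And>X1 X2. (rd (m X1 (m X2 X1)) X1) = (m X1 X2)" by (metis c_0_12 rd2)
  have c_0_16: "\<And>X1 X2. (m X1 (rd X2 X1)) = (rd (m X1 X2) X1)" by (metis c_0_13 rd1)
  have c_0_17: "\<And>X1 X2 X3. (m (m X1 X2) (m X3 X1)) = (m X1 (m (m X2 X3) X1))" by (metis c_0_12 mou)
  have c_0_18: "\<And>X1 X2. (ld X1 (rd (m X1 X2) X1)) = (rd X2 X1)" by (metis c_0_16 ld2)
  have c_0_19: "\<And>X1. (rd X1 X1) = e" by (metis lid rd2)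
  have c_0_20: "\<And>X1 X2 X3. (m X1 (m (m X2 (rd X3 X1)) X1)) = (m (m X1 X2) X3)" by (metis c_0_17 rd1)
  have c_0_21: "\<And>X1. (rd e X1) = (ld X1 e)" by (metis c_0_18 c_0_19 rid)
  have c_0_22: "\<And>X1 X2. (m X1 (m (m X2 (ld X1 e)) X1)) = (m X1 X2)" by (metis c_0_20 c_0_21 rid)
  have c_0_23: "\<And>X1 X2. (m (m X1 (ld X2 e)) X2) = X1" by (metis c_0_22 ld2)
  have c_0_25: "\<And>X1 X2. (ld (m X1 (ld X2 e)) X1) = X2" by (metis c_0_23 ld2)
  have c_0_26: "\<And>X1 X2. (m (m X1 X1) X2) = (m X1 (m X1 X2))" by (metis c_0_16 c_0_20 rd1)
  have c_0_27: "\<And>X1 X2. (rd X1 (ld X2 X1)) = X2" by (metis ld1 rd2)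
  have c_0_28: "\<And>X1 X2. (ld (m X1 X2) X1) = (ld X2 e)" by (metis c_0_25 lid)
  have c_0_29: "\<And>X1 X2. (m X1 (m (ld X1 X2) X1)) = (m X2 X1)" by (metis c_0_12 ld1)
  have c_0_30: "\<And>X1 X2. (rd (m X1 (m X1 X2)) X2) = (m X1 X1)" by (metis c_0_26 rd2)
  have c_0_31: "\<And>X1 X2. (rd X1 (ld X2 e)) = (m X1 X2)" by (metis c_0_27 c_0_28)
  have c_0_32: "\<And>X1 X2. (m X1 (ld X2 e)) = (rd X1 X2)" by (metis c_0_23 rd2)
  have c_0_33: "\<And>X1 X2. (m (ld X1 X2) X1) = (ld X1 (m X2 X1))" by (metis c_0_29 ld2)
  have c_0_34: "\<And>X1 X2. (ld (m X1 X1) (m X1 (m X1 X2))) = X2" by (metis c_0_26 ld2)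
  have c_0_35: "\<And>X1 X2. (m (m X1 (rd X1 X2)) X2) = (m X1 X1)" by (metis c_0_30 c_0_31 c_0_32)
  have c_0_36: "\<And>X1 X2. (m (m X1 X2) (m X1 X2)) = (m X1 (m X2 (m X1 X2)))" by (metis c_0_13 c_0_17 c_0_30)
  have c_0_37: "\<And>X1 X2. (m (m X1 X2) X2) = (m X1 (m X2 X2))" by (metis c_0_12 c_0_17 c_0_33 c_0_34)
  have c_0_38: "\<And>X1 X2. (m (m X1 (m X2 X1)) X2) = (m X1 (m X2 (m X1 X2)))" by (metis c_0_12 c_0_35 c_0_36 rd2)
  have c_0_39: "\<And>X1 X2 X3. (m (m X1 X2) (m X3 (m X1 (m X3 X1)))) = (m X1 (m (m (m (m X2 X3) X1) X3) X1))" by (metis c_0_17 c_0_36 c_0_37)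
  have c_0_40: "\<And>X1 X2 X3. (m X1 (m (m (m (m X2 X3) X1) X3) X1)) = (m X1 (m (m X2 (m X3 (m X1 X3))) X1))" by (metis c_0_17 c_0_38 c_0_39)
  have c_0_42: "\<And>X1 X2 X3. (m (m (m (m X1 X2) X3) X2) X3) = (m (m X1 (m X2 (m X3 X2))) X3)" by (metis c_0_40 ld2)
  have c_0_44: "\<And>X1 X2 X3. (m (m (m X1 X2) X3) X2) = (m X1 (m X2 (m X3 X2)))" by (metis c_0_42 rd2)
  have c_0_43p: "(m (m (m c a) b) a) = (m c (m a (m b a)))" by (metis c_0_44)
  have c_0_41p: "(m (m (m c a) b) a) = (m c (m a (m b a)))" by (metis c_0_43p)
  then show ?thesis by metis
qed

lemma ip1: "m (rd e a) (m a b) = b"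
proof -
  have c_0_10: "\<And>X1 X2. (m (m X1 X2) X1) = (m X1 (m X2 X1))" by (metis lid mou rid)
  have c_0_11: "\<And>X1 X2 X3. (m (m X1 X2) (m X3 X1)) = (m X1 (m (m X2 X3) X1))" by (metis c_0_10 mou)
  have c_0_14: "\<And>X1 X2 X3. (m X1 (m (m X2 (rd X3 X1)) X1)) = (m (m X1 X2) X3)" by (metis c_0_11 rd1)
  have c_0_15: "\<And>X1 X2. (rd (m X1 (m X2 X1)) X1) = (m X1 X2)" by (metis c_0_10 rd2)
  have c_0_16: "\<And>X1 X2. (m (m X1 X1) X2) = (m X1 (m X1 X2))" by (metis c_0_10 c_0_14 rd1)
  have c_0_17: "\<And>X1 X2. (rd (m X1 X2) X1) = (m X1 (rd X2 X1))" by (metis c_0_15 rd1)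
  have c_0_18: "\<And>X1. (rd X1 X1) = e" by (metis lid rd2)
  have c_0_19: "\<And>X1 X2. (rd (m X1 (m X1 X2)) X2) = (m X1 X1)" by (metis c_0_16 rd2)
  have c_0_21: "\<And>X1. (m X1 (rd e X1)) = e" by (metis c_0_17 c_0_18 rid)
  have c_0_22: "\<And>X1 X2. (m (m X1 X2) (m X1 X2)) = (m X1 (m X2 (m X1 X2)))" by (metis c_0_11 c_0_17 c_0_19 rd2)
  have c_0_23: "\<And>X1 X2 X3. (rd (m (m X1 X2) X3) X1) = (m X1 (m X2 (rd X3 X1)))" by (metis c_0_14 c_0_17 rd2)
  have c_0_24: "\<And>X1. (rd e X1) = (ld X1 e)" by (metis c_0_21 ld2)
  have c_0_25: "\<And>X1 X2. (m (rd X1 X2) (m X2 X1)) = (m X1 X1)" by (metis c_0_22 rd1)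
  have c_0_26: "\<And>X1 X2. (m X1 (m X2 (ld X1 e))) = (m X1 (rd X2 X1))" by (metis c_0_17 c_0_23 c_0_24 rid)
  have c_0_27: "\<And>X1 X2. (rd (m X1 X1) (m X2 X1)) = (rd X1 X2)" by (metis c_0_25 rd2)
  have c_0_28: "\<And>X1 X2. (m X1 (ld X2 e)) = (rd X1 X2)" by (metis c_0_26 ld2)
  have c_0_29: "\<And>X1 X2. (rd (m X1 X1) X2) = (rd X1 (rd X2 X1))" by (metis c_0_27 rd1)
  have c_0_30: "\<And>X1 X2. (rd X1 (rd X2 X1)) = (m X1 (rd X1 X2))" by (metis c_0_16 c_0_28 c_0_29)
  have c_0_31: "\<And>X1 X2 X3. (ld (m X1 X2) (m X1 (m (m X2 X3) X1))) = (m X3 X1)" by (metis c_0_11 ld2)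
  have c_0_32: "\<And>X1 X2. (m (m X1 (rd X1 X2)) (rd X2 X1)) = X1" by (metis c_0_30 rd1)
  have c_0_33: "\<And>X1. (ld X1 X1) = e" by (metis ld2 rid)
  have c_0_34: "\<And>X1 X2. (m (rd X1 X2) (rd X2 X1)) = e" by (metis c_0_31 c_0_32 c_0_33 rd1)
  have c_0_36: "\<And>X1 X2. (m (rd X1 (m X2 X1)) X2) = e" by (metis c_0_34 rd2)
  have c_0_38: "\<And>X1 X2. (rd X1 (m X2 X1)) = (ld X2 e)" by (metis c_0_24 c_0_36 rd2)
  have c_0_40: "\<And>X1 X2. (m (ld X1 e) (m X1 X2)) = X2" by (metis c_0_38 rd1)
  have c_0_39p: "(m (ld a e) (m a b)) = b" by (metis c_0_40)
  have c_0_37p: "(m (rd e a) (m a b)) = b" by (metis c_0_39p c_0_24)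
  have c_0_35p: "(m (rd e a) (m a b)) = b" by (metis c_0_37p)
  then show ?thesis by metis
qed

lemma ip2: "m (m b a) (rd e a) = b"
proof -
  have c_0_11: "\<And>X1 X2. (m (m X1 X2) X1) = (m X1 (m X2 X1))" by (metis lid mou rid)
  have c_0_12: "\<And>X1 X2. (rd (m X1 (m X2 X1)) X1) = (m X1 X2)" by (metis c_0_11 rd2)
  have c_0_14: "\<And>X1 X2 X3. (m (m X1 X2) (m X3 X1)) = (m X1 (m (m X2 X3) X1))" by (metis c_0_11 mou)
  have c_0_15: "\<And>X1 X2. (rd (m X1 X2) X1) = (m X1 (rd X2 X1))" by (metis c_0_12 rd1)
  have c_0_16: "\<And>X1. (rd X1 X1) = e" by (metis lid rd2)
  have c_0_17: "\<And>X1 X2 X3. (m X1 (m (m X2 (rd X3 X1)) X1)) = (m (m X1 X2) X3)" by (metis c_0_14 rd1)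
  have c_0_19: "\<And>X1. (m X1 (rd e X1)) = e" by (metis c_0_15 c_0_16 rid)
  have c_0_21: "\<And>X1 X2 X3. (rd (m (m X1 X2) X3) X1) = (m X1 (m X2 (rd X3 X1)))" by (metis c_0_15 c_0_17 rd2)
  have c_0_22: "\<And>X1. (rd e X1) = (ld X1 e)" by (metis c_0_19 ld2)
  have c_0_24: "\<And>X1 X2. (m X1 (m X2 (ld X1 e))) = (m X1 (rd X2 X1))" by (metis c_0_15 c_0_21 c_0_22 rid)
  have c_0_26: "\<And>X1 X2. (m X1 (ld X2 e)) = (rd X1 X2)" by (metis c_0_24 ld2)
  have c_0_25p: "(m (m b a) (ld a e)) = b" by (metis c_0_26 rd2)
  have c_0_23p: "(m (m b a) (rd e a)) = b" by (metis c_0_25p c_0_22)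
  have c_0_20p: "(m (m b a) (rd e a)) = b" by (metis c_0_23p)
  then show ?thesis by metis
qed

lemma ip3: "ld a e = rd e a"
proof -
  have c_0_12: "\<And>X1 X2. (m (m X1 X2) X1) = (m X1 (m X2 X1))" by (metis lid mou rid)
  have c_0_13: "\<And>X1 X2. (ld (m X1 X2) (m X1 (m X2 X1))) = X1" by (metis c_0_12 ld2)
  have c_0_17: "\<And>X1 X2. (ld (m X1 (rd X2 X1)) (m X1 X2)) = X1" by (metis c_0_13 rd1)
  have c_0_18: "\<And>X1 X2. (rd X1 (ld X2 X1)) = X2" by (metis ld1 rd2)
  have c_0_19: "\<And>X1. (ld (m X1 (rd e X1)) X1) = X1" by (metis c_0_17 rid)
  have c_0_20: "\<And>X1. (rd X1 X1) = e" by (metis lid rd2)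
  have c_0_22: "\<And>X1. (m X1 (rd e X1)) = e" by (metis c_0_18 c_0_19 c_0_20)
  have c_0_24: "\<And>X1. (rd e X1) = (ld X1 e)" by (metis c_0_22 ld2)
  have c_0_23p: "(ld a e) = (rd e a)" by (metis c_0_24)
  have c_0_21p: "(ld a e) = (rd e a)" by (metis c_0_23p)
  then show ?thesis by metis
qed

lemma semiS: "m (rd a c) (ld (rd e c) (m (rd b c) (ld (rd e c) a))) = m (m a b) a"
proof -
  have c_0_12: "\<And>X1 X2. (m (m X1 X2) X1) = (m X1 (m X2 X1))" by (metis lid mou rid)
  have c_0_13: "\<And>X1 X2. (rd (m X1 (m X2 X1)) X1) = (m X1 X2)" by (metis c_0_12 rd2)
  have c_0_15: "\<And>X1 X2. (rd (m X1 X2) X1) = (m X1 (rd X2 X1))" by (metis c_0_13 rd1)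
  have c_0_16: "\<And>X1. (rd X1 X1) = e" by (metis lid rd2)
  have c_0_17: "\<And>X1 X2 X3. (m (m X1 X2) (m X3 X1)) = (m X1 (m (m X2 X3) X1))" by (metis c_0_12 mou)
  have c_0_18: "\<And>X1. (m X1 (rd e X1)) = e" by (metis c_0_15 c_0_16 rid)
  have c_0_19: "\<And>X1 X2. (m X1 (m (m (rd e X1) X2) X1)) = (m X2 X1)" by (metis c_0_17 c_0_18 lid)
  have c_0_21: "\<And>X1 X2. (m X1 (m (rd e X1) X2)) = X2" by (metis c_0_15 c_0_19 rd2)
  have c_0_22: "\<And>X1 X2. (m (rd e X1) X2) = (ld X1 X2)" by (metis c_0_21 ld2)
  have c_0_23: "\<And>X1 X2. (rd (ld X1 X2) X2) = (rd e X1)" by (metis c_0_22 rd2)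
  have c_0_24: "\<And>X1 X2. (ld (rd X1 X2) X1) = X2" by (metis ld2 rd1)
  have c_0_25: "\<And>X1 X2. (rd e (rd X1 X2)) = (rd X2 X1)" by (metis c_0_23 c_0_24)
  have c_0_26: "\<And>X1 X2 X3. (ld (m X1 X2) (m X1 (m (m X2 X3) X1))) = (m X3 X1)" by (metis c_0_17 ld2)
  have c_0_27: "\<And>X1 X2 X3. (m X1 (m (m X2 (rd X3 X1)) X1)) = (m (m X1 X2) X3)" by (metis c_0_17 rd1)
  have c_0_28: "\<And>X1 X2. (m (rd X1 X2) (rd X2 X1)) = e" by (metis c_0_25 rd1)
  have c_0_30: "\<And>X1 X2. (ld (m X1 X2) (m X1 X1)) = (ld X2 X1)" by (metis c_0_18 c_0_22 c_0_26 lid)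
  have c_0_31: "\<And>X1 X2. (m (m X1 (rd X1 X2)) X2) = (m X1 X1)" by (metis c_0_27 c_0_28 lid)
  have c_0_32: "\<And>X1 X2. (rd X1 (ld X2 X1)) = X2" by (metis ld1 rd2)
  have c_0_33: "\<And>X1. (ld X1 e) = (rd e X1)" by (metis c_0_18 ld2)
  have c_0_34: "\<And>X1 X2. (ld (ld X1 X2) X1) = (ld X2 (m X1 X1))" by (metis c_0_30 ld1)
  have c_0_35: "\<And>X1 X2. (m (m X1 X2) X2) = (m X1 (m X2 X2))" by (metis c_0_27 c_0_31)
  have c_0_36: "\<And>X1 X2. (ld (rd e X1) X2) = (m X1 X2)" by (metis c_0_22 c_0_32 c_0_33)
  have c_0_37: "\<And>X1 X2. (rd X1 (ld X2 (m X1 X1))) = (ld X1 X2)" by (metis c_0_32 c_0_34)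
  have c_0_38: "\<And>X1 X2. (ld X1 (m X2 X2)) = (m (ld X1 X2) X2)" by (metis c_0_22 c_0_35)
  have c_0_39: "\<And>X1 X2. (rd X1 (m X2 X1)) = (rd e X2)" by (metis c_0_32 c_0_36)
  have c_0_40: "\<And>X1 X2. (rd e (ld X1 X2)) = (ld X2 X1)" by (metis c_0_37 c_0_38 c_0_39)
  have c_0_41: "\<And>X1 X2. (ld (m X1 X2) X1) = (rd e X2)" by (metis c_0_40 ld2)
  have c_0_43: "\<And>X1 X2 X3. (ld (m X1 X2) (m X1 (m X3 X1))) = (m (ld X2 X3) X1)" by (metis c_0_26 ld1)
  have c_0_44: "\<And>X1 X2. (rd X1 (rd e X2)) = (m X1 X2)" by (metis c_0_32 c_0_41)
  have c_0_46: "\<And>X1 X2 X3. (ld (m X1 X2) (m X1 X3)) = (m (ld X2 (rd X3 X1)) X1)" by (metis c_0_43 rd1)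
  have c_0_47: "\<And>X1 X2. (m X1 (rd e X2)) = (rd X1 X2)" by (metis c_0_44 lid)
  have c_0_48: "\<And>X1 X2 X3. (ld (rd X1 X2) X3) = (m (rd X2 X1) X3)" by (metis c_0_22 c_0_25)
  have c_0_49: "\<And>X1. (rd X1 e) = X1" by (metis rd1 rid)
  have c_0_51: "\<And>X1 X2 X3. (m (m X1 (rd X2 X3)) X3) = (m (rd X1 X3) (m X3 X2))" by (metis c_0_46 c_0_47 c_0_48 c_0_49)
  have c_0_53: "\<And>X1 X2 X3. (m X1 (m (rd X2 X1) (m X1 X3))) = (m (m X1 X2) X3)" by (metis c_0_27 c_0_51)
  have c_0_54: "\<And>X1 X2 X3. (m (rd X1 X2) (m X3 X1)) = (m X1 (m (ld X2 X3) X1))" by (metis c_0_17 c_0_22 c_0_47)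
  have c_0_52p: "(m (rd a c) (m c (m (rd b c) (m c a)))) = (m a (m b a))" by (metis c_0_53 c_0_54 ld2)
  have c_0_50p: "(m (rd a c) (ld (rd e c) (m (rd b c) (ld (rd e c) a)))) = (m a (m b a))" by (metis c_0_52p c_0_36 c_0_36)
  have c_0_45p: "(m (rd a c) (ld (rd e c) (m (rd b c) (ld (rd e c) a)))) = (m (m a b) a)" by (metis c_0_50p c_0_12)
  have c_0_42p: "(m (rd a c) (ld (rd e c) (m (rd b c) (ld (rd e c) a)))) = (m (m a b) a)" by (metis c_0_45p)
  then show ?thesis by metis
qed

lemma I1: "ld (m p x) (m p (m x u)) = ld p (m (m p (rd u x)) x)"
proof -
  have c_0_12: "\<And>X1 X2. (m (m X1 X2) X1) = (m X1 (m X2 X1))" by (metis lid mou rid)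
  have c_0_13: "\<And>X1 X2. (rd (m X1 (m X2 X1)) X1) = (m X1 X2)" by (metis c_0_12 rd2)
  have c_0_15: "\<And>X1 X2. (rd (m X1 X2) X1) = (m X1 (rd X2 X1))" by (metis c_0_13 rd1)
  have c_0_16: "\<And>X1. (rd X1 X1) = e" by (metis lid rd2)
  have c_0_18: "\<And>X1. (m X1 (rd e X1)) = e" by (metis c_0_15 c_0_16 rid)
  have c_0_19: "\<And>X1. (rd e X1) = (ld X1 e)" by (metis c_0_18 ld2)
  have c_0_20: "\<And>X1 X2 X3. (m (m X1 X2) (m X3 X1)) = (m X1 (m (m X2 X3) X1))" by (metis c_0_12 mou)
  have c_0_21: "\<And>X1. (m (ld X1 e) X1) = e" by (metis c_0_19 rd1)
  have c_0_22: "\<And>X1 X2 X3. (rd (m X1 (m (m X2 X3) X1)) (m X3 X1)) = (m X1 X2)" by (metis c_0_20 rd2)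
  have c_0_23: "\<And>X1 X2. (m X1 (m (m X2 (ld X1 e)) X1)) = (m X1 X2)" by (metis c_0_20 c_0_21 rid)
  have c_0_24: "\<And>X1 X2. (rd (m X1 X1) (m X2 X1)) = (m X1 (ld X2 e))" by (metis c_0_21 c_0_22 lid)
  have c_0_25: "\<And>X1 X2. (m (m X1 (ld X2 e)) X2) = X1" by (metis c_0_23 ld2)
  have c_0_26: "\<And>X1 X2 X3. (m X1 (m (m X2 (rd X3 X1)) X1)) = (m (m X1 X2) X3)" by (metis c_0_20 rd1)
  have c_0_27: "\<And>X1 X2. (m X1 (ld (rd X2 X1) e)) = (rd (m X1 X1) X2)" by (metis c_0_24 rd1)
  have c_0_28: "\<And>X1 X2. (m X1 (ld X2 e)) = (rd X1 X2)" by (metis c_0_25 rd2)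
  have c_0_29: "\<And>X1 X2. (m (m X1 X1) X2) = (m X1 (m X1 X2))" by (metis c_0_12 c_0_26 rd1)
  have c_0_30: "\<And>X1 X2. (rd (m X1 X1) X2) = (rd X1 (rd X2 X1))" by (metis c_0_27 c_0_28)
  have c_0_31: "\<And>X1 X2. (ld X1 (rd X1 X2)) = (ld X2 e)" by (metis c_0_28 ld2)
  have c_0_32: "\<And>X1 X2. (ld (rd X1 X2) X1) = X2" by (metis ld2 rd1)
  have c_0_33: "\<And>X1 X2. (rd X1 (rd X2 X1)) = (m X1 (rd X1 X2))" by (metis c_0_28 c_0_29 c_0_30)
  have c_0_34: "\<And>X1 X2. (ld (m X1 X2) X1) = (ld X2 e)" by (metis c_0_31 rd2)
  have c_0_35: "\<And>X1 X2. (ld (rd X1 X2) e) = (rd X2 X1)" by (metis c_0_32 c_0_33 c_0_34)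
  have c_0_36: "\<And>X1 X2. (rd X1 (m X2 X1)) = (ld X2 e)" by (metis c_0_35 rd2)
  have c_0_39: "\<And>X1 X2 X3. (ld (m X1 X2) (m X1 (m (m X2 X3) X1))) = (m X3 X1)" by (metis c_0_20 ld2)
  have c_0_40: "\<And>X1 X2. (rd (ld X1 X2) X2) = (ld X1 e)" by (metis c_0_36 ld1)
  have c_0_41: "\<And>X1 X2. (ld (m X1 X2) e) = (ld X2 (ld X1 e))" by (metis c_0_31 c_0_36)
  have c_0_42: "\<And>X1 X2. (rd X1 (ld X2 X1)) = X2" by (metis ld1 rd2)
  have c_0_44: "\<And>X1 X2 X3. (ld X1 (m (m X1 X2) X3)) = (m (m X2 (rd X3 X1)) X1)" by (metis c_0_26 ld2)
  have c_0_45: "\<And>X1 X2 X3. (ld (m X1 X2) (m X1 (m X3 X1))) = (m (ld X2 X3) X1)" by (metis c_0_39 ld1)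
  have c_0_46: "\<And>X1 X2. (rd (ld X1 e) X2) = (ld X1 (ld X2 e))" by (metis c_0_34 c_0_40 c_0_41)
  have c_0_47: "\<And>X1 X2 X3. (m X1 (ld X2 (ld X3 e))) = (rd X1 (m X3 X2))" by (metis c_0_28 c_0_41)
  have c_0_48: "\<And>X1 X2. (ld (ld X1 e) X2) = (m X1 X2)" by (metis c_0_32 c_0_36)
  have c_0_49: "\<And>X1 X2. (ld (ld X1 X2) e) = (ld X2 X1)" by (metis c_0_31 c_0_42)
  have c_0_51: "\<And>X1 X2 X3. (ld (m X1 X2) (m X1 X3)) = (m (ld X2 (rd X3 X1)) X1)" by (metis c_0_45 rd1)
  have c_0_52: "\<And>X1 X2 X3. (ld X1 (rd (m X1 X2) X3)) = (m (rd X2 (m X1 X3)) X1)" by (metis c_0_28 c_0_44 c_0_46 c_0_47)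
  have c_0_53: "\<And>X1 X2 X3. (ld (rd X1 X2) X3) = (m (rd X2 X1) X3)" by (metis c_0_35 c_0_48)
  have c_0_54: "\<And>X1 X2 X3. (ld (ld X1 X2) X3) = (m (ld X2 X1) X3)" by (metis c_0_48 c_0_49)
  have c_0_55: "\<And>X1. (ld e X1) = X1" by (metis ld1 lid)
  have c_0_57: "\<And>X1 X2 X3. (m (m X1 (rd X2 X3)) X3) = (m (rd X1 X3) (m X3 X2))" by (metis c_0_28 c_0_51 c_0_53 c_0_54 c_0_55)
  have c_0_59: "\<And>X1 X2 X3. (m (rd X1 (m X2 X3)) X2) = (m (rd X1 X2) (rd X2 X3))" by (metis c_0_28 c_0_46 c_0_47 c_0_57)
  have c_0_58p: "(m (m (rd u (m x p)) x) p) = (m (rd (rd u x) p) (m p x))" by (metis c_0_59 c_0_57)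
  have c_0_56p: "(m (m (rd u (m x p)) x) p) = (m (m (rd u x) (rd x p)) p)" by (metis c_0_58p c_0_57)
  have c_0_50p: "(ld (m p x) (m p (m x u))) = (m (m (rd u x) (rd x p)) p)" by (metis c_0_56p c_0_51 c_0_52)
  have c_0_43p: "(ld (m p x) (m p (m x u))) = (ld p (m (m p (rd u x)) x))" by (metis c_0_50p c_0_44)
  have c_0_38p: "(ld (m p x) (m p (m x u))) = (ld p (m (m p (rd u x)) x))" by (metis c_0_43p)
  then show ?thesis by metis
qed

lemma opm: "m (m a c) (m b a) = m a (m (m c b) a)"
proof -
  have c_0_8: "\<And>X1 X2. (m (m X1 X2) X1) = (m X1 (m X2 X1))" by (metis lid mou rid)
  have c_0_10: "\<And>X1 X2 X3. (m (m X1 X2) (m X3 X1)) = (m X1 (m (m X2 X3) X1))" by (metis c_0_8 mou)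
  have c_0_9p: "(m (m a c) (m b a)) = (m a (m (m c b) a))" by (metis c_0_10)
  have c_0_7p: "(m (m a c) (m b a)) = (m a (m (m c b) a))" by (metis c_0_9p)
  then show ?thesis by metis
qed

lemma et: "m (ld s (m u s)) (m (ld s (m v s)) (rd e (m s (m s s)))) = m (ld s (m (m u v) s)) (rd e (m s (m s s)))"
proof -
  have c_0_19: "\<And>X1 X2. (m (m X1 X2) (ld X2 e)) = X1" by (metis ip2 ip3)
  have c_0_20: "\<And>X1 X2. (ld (rd X1 X2) X1) = X2" by (metis ld2 rd1)
  have c_0_21: "\<And>X1 X2. (rd X1 (ld X2 e)) = (m X1 X2)" by (metis c_0_19 rd2)
  have c_0_23: "\<And>X1 X2. (ld (m X1 X2) X1) = (ld X2 e)" by (metis c_0_20 c_0_21)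
  have c_0_25: "\<And>X1 X2. (m (ld X1 e) (m X1 X2)) = X2" by (metis ip1 ip3)
  have c_0_28: "\<And>X1 X2. (ld (ld X1 X2) e) = (ld X2 X1)" by (metis c_0_23 ld1)
  have c_0_29: "\<And>X1 X2. (ld (ld X1 e) X2) = (m X1 X2)" by (metis c_0_25 ld2)
  have c_0_30: "\<And>X1 X2. (rd X1 (ld X2 X1)) = X2" by (metis ld1 rd2)
  have c_0_34: "\<And>X1 X2 X3. (rd (m X1 (m X2 (m X3 X2))) X2) = (m (m X1 X2) X3)" by (metis rd2 rmouf)
  have c_0_35: "\<And>X1 X2. (m X1 (ld X2 e)) = (rd X1 X2)" by (metis c_0_19 rd1)
  have c_0_36: "\<And>X1 X2. (m (ld X1 e) X2) = (ld X1 X2)" by (metis c_0_25 ld1)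
  have c_0_37: "\<And>X1 X2. (ld (m X1 X2) e) = (ld X2 (ld X1 e))" by (metis c_0_28 c_0_29)
  have c_0_39: "\<And>X1 X2. (rd X1 (m X2 X1)) = (ld X2 e)" by (metis c_0_29 c_0_30)
  have c_0_40: "\<And>X1 X2. (rd (m X1 (m X2 X1)) X1) = (m X1 X2)" by (metis flex rd2)
  have c_0_41: "\<And>X1 X2 X3. (m (m X1 X2) (m X3 X1)) = (m X1 (m (m X2 X3) X1))" by (metis flex mou)
  have c_0_43: "\<And>X1 X2. (m X1 (m (ld X1 X2) X1)) = (m X2 X1)" by (metis flex ld1)
  have c_0_44: "\<And>X1 X2 X3. (rd (m X1 (m X2 X3)) X2) = (m (m X1 X2) (rd X3 X2))" by (metis c_0_34 rd1)
  have c_0_45: "\<And>X1 X2. (rd (ld X1 e) X2) = (ld X1 (ld X2 e))" by (metis c_0_35 c_0_36)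
  have c_0_46: "\<And>X1 X2 X3. (m X1 (ld X2 (ld X3 e))) = (rd X1 (m X3 X2))" by (metis c_0_35 c_0_37)
  have c_0_47: "\<And>X1 X2. (rd (m X1 X1) X2) = (m X1 (rd X1 X2))" by (metis c_0_35 lalt)
  have c_0_48: "\<And>X1 X2. (ld (rd X1 X2) e) = (rd X2 X1)" by (metis c_0_39 rd1)
  have c_0_49: "\<And>X1 X2. (rd (m X1 X2) X1) = (m X1 (rd X2 X1))" by (metis c_0_40 rd1)
  have c_0_50: "\<And>X1 X2 X3. (m X1 (m (m (ld X1 X2) X3) X1)) = (m X2 (m X3 X1))" by (metis c_0_41 ld1)
  have c_0_52: "\<And>X1 X2. (ld X1 (m X2 X1)) = (m (ld X1 X2) X1)" by (metis c_0_43 ld2)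
  have c_0_53: "\<And>X1 X2 X3. (rd (m X1 (rd X2 X3)) X2) = (rd (m X1 X2) (m X2 X3))" by (metis c_0_35 c_0_44 c_0_45 c_0_46)
  have c_0_54: "\<And>X1 X2. (m (m X1 (rd X1 X2)) X2) = (m X1 X1)" by (metis c_0_47 rd1)
  have c_0_55: "\<And>X1 X2 X3. (ld (rd X1 X2) X3) = (m (rd X2 X1) X3)" by (metis c_0_36 c_0_48)
  have c_0_56: "\<And>X1 X2 X3. (rd (m X1 (m X2 X3)) X3) = (m X3 (m (ld X3 X1) X2))" by (metis c_0_49 c_0_50 rd2)
  have c_0_57: "\<And>X1 X2 X3. (ld (ld X1 X2) X3) = (m (ld X2 X1) X3)" by (metis c_0_28 c_0_29)
  have c_0_61: "\<And>X1 X2 X3. (rd (m X1 X2) (m X2 (m X3 X2))) = (rd (rd X1 X3) X2)" by (metis c_0_35 c_0_39 c_0_53)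
  have c_0_62: "\<And>X1 X2. (rd (ld X1 X2) X1) = (ld X1 (rd X2 X1))" by (metis c_0_35 c_0_36 flex)
  have c_0_63: "\<And>X1 X2. (rd (rd X1 X2) X2) = (rd X1 (m X2 X2))" by (metis c_0_35 c_0_37 c_0_39 c_0_54 c_0_55)
  have c_0_64: "\<And>X1 X2 X3. (m (m X1 X2) (ld X2 X3)) = (m X2 (m (ld X2 X1) X3))" by (metis c_0_43 c_0_44 c_0_56 rd2)
  have c_0_65: "\<And>X1 X2 X3. (ld X1 (rd (m X2 X3) X1)) = (m (ld X1 X2) (rd X3 X1))" by (metis c_0_35 c_0_36 c_0_41)
  have c_0_66: "\<And>X1 X2 X3. (m (rd X1 X2) (m X2 (m X3 X2))) = (m (m X1 X3) X2)" by (metis rd1 rmouf)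
  have c_0_67: "\<And>X1 X2 X3. (rd X1 (ld X2 X3)) = (m X1 (ld X3 X2))" by (metis c_0_21 c_0_57 rid)
  have c_0_68: "\<And>X1. (ld e X1) = X1" by (metis ld1 lid)
  have c_0_70: "\<And>X1 X2 X3. (rd (m (ld X1 X2) (rd X3 X1)) X1) = (ld X1 (rd (m X2 X3) (m X1 X1)))" by (metis c_0_62 c_0_63 c_0_65)
  have c_0_71: "\<And>X1 X2 X3. (m X1 (m (ld X1 X2) (rd X3 X1))) = (rd (m X2 X3) X1)" by (metis c_0_35 c_0_36 c_0_64 c_0_66 c_0_67 c_0_68)
  have c_0_73: "\<And>X1 X2 X3. (m X1 (m (ld X1 X2) (rd X3 (m X1 X1)))) = (rd (m X2 (rd X3 X1)) X1)" by (metis c_0_63 c_0_71)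
  have c_0_72p: "(m s (m (ld s (ld s u)) (rd v (m s s)))) = (ld s (rd (m u v) (m s s)))" by (metis c_0_73 c_0_70)
  have c_0_69p: "(m s (m (ld s (ld s u)) (rd v (m s s)))) = (rd (m (ld s u) (rd v s)) s)" by (metis c_0_72p c_0_70)
  have c_0_60p: "(m (m (ld s u) s) (rd (m (ld s v) s) (m s (m s s)))) = (rd (m (ld s (m u v)) s) (m s (m s s)))" by (metis c_0_69p c_0_61 c_0_62 c_0_62 c_0_63 c_0_64 c_0_61 c_0_62 c_0_65)
  have c_0_51p: "(m (ld s (m u s)) (rd (ld s (m v s)) (m s (m s s)))) = (rd (ld s (m (m u v) s)) (m s (m s s)))" by (metis c_0_60p c_0_52 c_0_52 c_0_52)
  have c_0_42p: "(m (ld s (m u s)) (m (ld s (m v s)) (ld (m s (m s s)) e))) = (m (ld s (m (m u v) s)) (ld (m s (m s s)) e))" by (metis c_0_51p c_0_35 c_0_35)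
  have c_0_33p: "(m (ld s (m u s)) (m (ld s (m v s)) (rd e (m s (m s s))))) = (m (ld s (m (m u v) s)) (rd e (m s (m s s))))" by (metis c_0_42p ip3 ip3)
  have c_0_26p: "(m (ld s (m u s)) (m (ld s (m v s)) (rd e (m s (m s s))))) = (m (ld s (m (m u v) s)) (rd e (m s (m s s))))" by (metis c_0_33p)
  then show ?thesis by metis
qed


end



locale mset = mloop m e for m :: "'a \<Rightarrow> 'a \<Rightarrow> 'a" and e +
  fixes X :: "'a set" and L :: "'a set" and m' :: "'a \<Rightarrow> 'a \<Rightarrow> 'a" and e' :: 'a and f :: "'a \<Rightarrow> 'a"
  assumes loopL: "is_loop_on L m' e'"
    and fL: "\<And>x. f x \<in> L"
    and fhom: "\<And>x y. f (m x y) = m' (f x) (f y)"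
    and Xdef: "X = {x. f x = e'}"
    and cg: "comm_group_sub m X"
    and div3: "divisible m e 3"
    and div2: "divisible_on m e X 2"
begin

lemma eL: "e' \<in> L" using loopL unfolding is_loop_on_def by blast
lemma Llid: "z \<in> L \<Longrightarrow> m' e' z = z" using loopL unfolding is_loop_on_def by blast
lemma Lrid: "z \<in> L \<Longrightarrow> m' z e' = z" using loopL unfolding is_loop_on_def by blast
lemma Llcancel: "a \<in> L \<Longrightarrow> x \<in> L \<Longrightarrow> y \<in> L \<Longrightarrow> m' a x = m' a y \<Longrightarrow> x = y"
  using loopL unfolding is_loop_on_def bij_betw_def inj_on_def by blast
lemma Lrcancel: "a \<in> L \<Longrightarrow> x \<in> L \<Longrightarrow> y \<in> L \<Longrightarrow> m' x a = m' y a \<Longrightarrow> x = y"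
  using loopL unfolding is_loop_on_def bij_betw_def inj_on_def by blast

lemma memX: "x \<in> X \<longleftrightarrow> f x = e'" using Xdef by blast

lemma fe: "f e = e'"
proof -
  have "m' (f e) (f e) = m' (f e) e'" using fhom[of e e] lid Lrid[OF fL] by simp
  then show ?thesis using Llcancel[OF fL fL eL] by blast
qed

lemma eX: "e \<in> X" using fe memX by simp

lemma fld: "m' (f a) (f (ld a b)) = f b" using fhom[of a "ld a b"] ld1 by simp
lemma frd: "m' (f (rd b a)) (f a) = f b" using fhom[of "rd b a" a] rd1 by simp

lemma cosetX: "f s = f t \<Longrightarrow> ld s t \<in> X"
proof -
  assume "f s = f t"
  have "m' (f s) (f (ld s t)) = f t" by (rule fld)
  also have "\<dots> = m' (f s) e'" using \<open>f s = f t\<close> Lrid[OF fL] by simp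
  finally have "m' (f s) (f (ld s t)) = m' (f s) e'" .
  then show ?thesis using Llcancel[OF fL fL eL] memX by blast
qed

lemma cosetX': "f s = f t \<Longrightarrow> \<exists>z\<in>X. t = m s z"
  using cosetX ld1 by metis

lemma f_mX: "z \<in> X \<Longrightarrow> f (m s z) = f s" using Lrid[OF fL] memX by (simp add: fhom)
lemma f_Xm: "z \<in> X \<Longrightarrow> f (m z s) = f s" using Llid[OF fL] memX by (simp add: fhom)

lemma f_ld_eq: "f (ld a b) = f c \<longleftrightarrow> f b = m' (f a) (f c)"
proof
  assume "f (ld a b) = f c" then show "f b = m' (f a) (f c)" using fld by metis
next
  assume "f b = m' (f a) (f c)" then show "f (ld a b) = f c" using fld Llcancel[OF fL fL fL] by metis
qed
lemma f_rd_eq: "f (rd b a) = f c \<longleftrightarrow> f b = m' (f c) (f a)"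
proof
  assume "f (rd b a) = f c" then show "f b = m' (f c) (f a)" using frd by metis
next
  assume "f b = m' (f c) (f a)" then show "f (rd b a) = f c" using frd Lrcancel[OF fL fL fL] by metis
qed

lemma mX: "x \<in> X \<Longrightarrow> y \<in> X \<Longrightarrow> m x y \<in> X" using f_mX memX by simp
lemma ldX: "x \<in> X \<Longrightarrow> y \<in> X \<Longrightarrow> ld x y \<in> X"
  using f_ld_eq[of x y e] memX fe Lrid[OF eL] by simp
lemma rdX: "x \<in> X \<Longrightarrow> y \<in> X \<Longrightarrow> rd y x \<in> X"
  using f_rd_eq[of y x e] memX fe Lrid[OF eL] by simp

lemma comm: "x \<in> X \<Longrightarrow> y \<in> X \<Longrightarrow> m x y = m y x" using cg unfolding comm_group_sub_def by blast
lemma assoc: "x \<in> X \<Longrightarrow> y \<in> X \<Longrightarrow> z \<in> X \<Longrightarrow> m (m x y) z = m x (m y z)"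
  using cg unfolding comm_group_sub_def by blast

lemma swap4: assumes "a \<in> X" "b \<in> X" "c \<in> X" "d \<in> X" shows "m (m a b) (m c d) = m (m a c) (m b d)"
proof -
  have "m (m a b) (m c d) = m a (m b (m c d))" using assms assoc mX by simp
  also have "\<dots> = m a (m (m b c) d)" using assms assoc by simp
  also have "\<dots> = m a (m (m c b) d)" using assms comm by simp
  also have "\<dots> = m a (m c (m b d))" using assms assoc by simp
  also have "\<dots> = m (m a c) (m b d)" using assms assoc mX by simp
  finally show ?thesis .
qed

lemma sq: "z \<in> X \<Longrightarrow> \<exists>u\<in>X. m u u = z"
  using div2 unfolding divisible_on_def by (auto simp: numeral_2_eq_2 rid)

lemma cube: "\<exists>s. m s (m s s) = z"
  using div3 unfolding divisible_def by (auto simp: numeral_3_eq_3 rid)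

lemma form3: assumes x: "x \<in> X" and y: "y \<in> X" shows "m x (m y c) = m (m x y) c"
proof -
  obtain s where s3: "m s (m s s) = ld c e" using cube by blast
  have c_eq: "c = rd e (m s (m s s))" using rd2[of c "ld c e"] unfolding s3 ld1 by simp
  define T where "T u = ld s (m u s)" for u
  have TX: "T u \<in> X" if "u \<in> X" for u
    unfolding T_def using that f_ld_eq[of s "m u s" e] f_Xm[of u s] memX Lrid[OF fL] fe by simp
  have Tsurj: "\<exists>a\<in>X. T a = w" if "w \<in> X" for w
  proof
    show "T (rd (m s w) s) = w" unfolding T_def using rd1 ld2 by simp
    show "rd (m s w) s \<in> X" using that f_rd_eq[of "m s w" s e] f_mX[of w s] memX Llid[OF fL] fe by simp
  qed
  have pseudo: "m (T u) (m (T v) c) = m (T (m u v)) c" for u v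
    unfolding T_def c_eq by (rule et)
  define op where "op u v = rd (m u (m v c)) c" for u v
  have opdef: "m (op u v) c = m u (m v c)" for u v unfolding op_def by (rule rd1)
  have opT: "op (T a) (T b) = T (m a b)" for a b unfolding op_def pseudo by (rule rd2)
  have opX: "op u v \<in> X" if hu: "u \<in> X" and hv: "v \<in> X" for u v
  proof -
    obtain a where "a \<in> X" "u = T a" using Tsurj[OF hu] by blast
    moreover obtain b where "b \<in> X" "v = T b" using Tsurj[OF hv] by blast
    ultimately show ?thesis using opT TX mX by simp
  qed
  have opcomm: "op u v = op v u" if hu: "u \<in> X" and hv: "v \<in> X" for u v
  proof -
    obtain a where "a \<in> X" "u = T a" using Tsurj[OF hu] by blast
    moreover obtain b where "b \<in> X" "v = T b" using Tsurj[OF hv] by blast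
    ultimately show ?thesis using opT comm by simp
  qed
  have opassoc: "op (op u v) w = op u (op v w)" if hu: "u \<in> X" and hv: "v \<in> X" and hw: "w \<in> X" for u v w
  proof -
    obtain a where "a \<in> X" "u = T a" using Tsurj[OF hu] by blast
    moreover obtain b where "b \<in> X" "v = T b" using Tsurj[OF hv] by blast
    moreover obtain d where "d \<in> X" "w = T d" using Tsurj[OF hw] by blast
    ultimately show ?thesis using opT assoc mX by simp
  qed
  have opsq: "op u u = m u u" for u unfolding op_def lalt by (rule rd2)
  have lm: "op u (op v u) = m (m u v) u" for u v
  proof -
    have "m (op u (op v u)) c = m u (m (op v u) c)" by (rule opdef)
    also have "\<dots> = m u (m v (m u c))" by (simp add: opdef)
    also have "\<dots> = m (m (m u v) u) c" by (simp add: lmouf)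
    finally have "m (op u (op v u)) c = m (m (m u v) u) c" .
    then show ?thesis using rcancel by blast
  qed
  have key: "op (m u u) v = m (m u u) v" if hu: "u \<in> X" and hv: "v \<in> X" for u v
  proof -
    have "op (m u u) v = op (op u u) v" using opsq by simp
    also have "\<dots> = op u (op u v)" using opassoc that by blast
    also have "\<dots> = op u (op v u)" using opcomm that by simp
    also have "\<dots> = m (m u v) u" by (rule lm)
    also have "\<dots> = m u (m v u)" using that assoc by simp
    also have "\<dots> = m u (m u v)" using that comm by simp
    also have "\<dots> = m (m u u) v" using that assoc by simp
    finally show ?thesis .
  qed
  obtain u where u: "u \<in> X" "m u u = x" using sq x by blast
  have "op x y = m x y" using key u y by blast
  then show ?thesis using opdef[of x y] by simp
qed

end



context mloop begin

definition atp :: "('a \<Rightarrow> 'a) \<Rightarrow> ('a \<Rightarrow> 'a) \<Rightarrow> ('a \<Rightarrow> 'a) \<Rightarrow> bool" where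
  "atp \<alpha> \<beta> \<gamma> \<longleftrightarrow> (\<forall>v w. m (\<alpha> v) (\<beta> w) = \<gamma> (m v w))"

lemma atp_comp: "atp \<alpha> \<beta> \<gamma> \<Longrightarrow> atp \<alpha>' \<beta>' \<gamma>' \<Longrightarrow> atp (\<alpha> \<circ> \<alpha>') (\<beta> \<circ> \<beta>') (\<gamma> \<circ> \<gamma>')"
  unfolding atp_def by simp

lemma atpB: "atp (\<lambda>v. m (m b v) b) (ld b) (m b)"
  unfolding atp_def by (simp add: lmouf ld1)

lemma atpBi: "atp (\<lambda>v. ld b (rd v b)) (m b) (ld b)"
  unfolding atp_def
proof (intro allI)
  fix v w
  define z where "z = ld b (rd v b)"
  have zv: "m (m b z) b = v" unfolding z_def by (simp add: ld1 rd1)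
  have "m (m (m b z) b) (ld b (m b w)) = m b (m z (m b (ld b (m b w))))" by (rule lmouf)
  then have "m v w = m b (m z (m b w))" using zv by (simp add: ld2)
  then show "m z (m b w) = ld b (m v w)" by (simp add: ld2)
qed

lemma atpC: "atp (\<lambda>v. rd v b) (\<lambda>y. m b (m y b)) (\<lambda>v. m v b)"
  unfolding atp_def
proof (intro allI)
  fix v y
  have "m (m (m (rd v b) b) y) b = m (rd v b) (m b (m y b))" by (rule rmouf)
  then show "m (rd v b) (m b (m y b)) = m (m v y) b" by (simp add: rd1)
qed

lemma atp_semi:
  assumes A: "atp \<alpha> \<beta> \<gamma>" and ge: "\<gamma> e = e"
  shows "\<gamma> (m v (m w v)) = m (m (\<gamma> v) (\<gamma> w)) (\<gamma> v)"
proof -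
  define c where "c = \<beta> e"
  have a1: "\<alpha> x = rd (\<gamma> x) c" for x
  proof -
    have "m (\<alpha> x) c = \<gamma> x" using A unfolding atp_def c_def by (metis rid)
    then show ?thesis by (metis rd2)
  qed
  have b1: "\<beta> y = ld (rd e c) (\<gamma> y)" for y
  proof -
    have "m (\<alpha> e) (\<beta> y) = \<gamma> y" using A unfolding atp_def by (metis lid)
    then have "\<beta> y = ld (\<alpha> e) (\<gamma> y)" by (metis ld2)
    then show ?thesis using a1[of e] ge by simp
  qed
  have g: "\<gamma> (m x y) = m (rd (\<gamma> x) c) (ld (rd e c) (\<gamma> y))" for x y
    using A unfolding atp_def a1 b1 by metis
  show ?thesis unfolding g semiS ..
qed

definition lam where "lam a u x = ld (m a u) (m a (m u x))"
definition mu where "mu q p x = ld (m p q) (m (m p x) q)"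

lemma lam_atp: "\<exists>\<alpha> \<beta>. atp \<alpha> \<beta> (lam a u)"
proof -
  have "atp ((\<lambda>v. ld (m a u) (rd v (m a u))) \<circ> (\<lambda>v. m (m a v) a) \<circ> (\<lambda>v. m (m u v) u))
            (m (m a u) \<circ> ld a \<circ> ld u) (ld (m a u) \<circ> m a \<circ> m u)"
    by (intro atp_comp atpB atpBi)
  moreover have "ld (m a u) \<circ> m a \<circ> m u = lam a u" unfolding lam_def by (rule ext) simp
  ultimately show ?thesis by metis
qed

lemma mu_atp: "\<exists>\<alpha> \<beta>. atp \<alpha> \<beta> (mu q p)"
proof -
  have "atp ((\<lambda>v. ld (m p q) (rd v (m p q))) \<circ> (\<lambda>v. rd v q) \<circ> (\<lambda>v. m (m p v) p))
            (m (m p q) \<circ> (\<lambda>y. m q (m y q)) \<circ> ld p) (ld (m p q) \<circ> (\<lambda>v. m v q) \<circ> m p)"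
    by (intro atp_comp atpB atpBi atpC)
  moreover have "ld (m p q) \<circ> (\<lambda>v. m v q) \<circ> m p = mu q p" unfolding mu_def by (rule ext) simp
  ultimately show ?thesis by metis
qed

lemma lam_e: "lam a u e = e" unfolding lam_def by (simp add: rid ld_self)
lemma mu_e: "mu q p e = e" unfolding mu_def by (simp add: rid ld_self)

lemma lam_semi: "lam a u (m v (m w v)) = m (m (lam a u v) (lam a u w)) (lam a u v)"
  using lam_atp[of a u] atp_semi lam_e by metis
lemma mu_semi: "mu q p (m v (m w v)) = m (m (mu q p v) (mu q p w)) (mu q p v)"
  using mu_atp[of q p] atp_semi mu_e by metis

definition phi where "phi p x v = ld (m p x) (m p (m x v))"
lemma phi_eq: "phi p x v = ld p (m (m p (rd v x)) x)" unfolding phi_def by (rule I1)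

end

context mset begin

lemma TX: "u \<in> X \<Longrightarrow> ld s (m u s) \<in> X"
  using f_ld_eq[of s "m u s" e] f_Xm[of u s] memX Lrid[OF fL] fe by simp
lemma TiX: "w \<in> X \<Longrightarrow> rd (m s w) s \<in> X"
  using f_rd_eq[of "m s w" s e] f_mX[of w s] memX Llid[OF fL] fe by simp

lemma Thom: assumes u: "u \<in> X" and v: "v \<in> X"
  shows "ld s (m (m u v) s) = m (ld s (m u s)) (ld s (m v s))"
proof -
  define c where "c = rd e (m s (m s s))"
  have "m (ld s (m u s)) (m (ld s (m v s)) c) = m (ld s (m (m u v) s)) c"
    unfolding c_def by (rule et)
  moreover have "m (ld s (m u s)) (m (ld s (m v s)) c) = m (m (ld s (m u s)) (ld s (m v s))) c"
    by (rule form3[OF TX[OF u] TX[OF v]])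
  ultimately show ?thesis using rcancel by metis
qed

lemma form1: assumes x: "x \<in> X" and y: "y \<in> X" shows "m (m c x) y = m c (m x y)"
proof -
  interpret op: mset "\<lambda>a b. m b a" e X L "\<lambda>a b. m' b a" e' f
  proof
    show "moufang (\<lambda>a b. m b a) e"
      unfolding moufang_def is_loop_def using lid rid bijL bijR opm by simp
    show "is_loop_on L (\<lambda>a b. m' b a) e'"
      using loopL unfolding is_loop_on_def by simp
    show "f x \<in> L" for x by (rule fL)
    show "f (m y x) = m' (f y) (f x)" for x y by (rule fhom)
    show "X = {x. f x = e'}" by (rule Xdef)
    have h1: "\<forall>x\<in>X. \<forall>y\<in>X. m y x = m x y" using comm by blast
    have h2: "\<forall>x\<in>X. \<forall>y\<in>X. \<forall>z\<in>X. m z (m y x) = m (m z y) x" using assoc by simp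
    show "comm_group_sub (\<lambda>a b. m b a) X"
      unfolding comm_group_sub_def using h1 h2 by blast
    show "divisible (\<lambda>a b. m b a) e 3"
      unfolding divisible_def by (simp add: numeral_3_eq_3 lid) (metis cube flex)
    show "divisible_on (\<lambda>a b. m b a) e X 2"
      using div2 unfolding divisible_on_def by (simp add: numeral_2_eq_2 lid rid)
  qed
  show ?thesis using op.form3[OF y x] by simp
qed

lemma form2: assumes x: "x \<in> X" and y: "y \<in> X" shows "m x (m s y) = m (m x s) y"
proof -
  define y2 where "y2 = rd (m s y) s"
  have y2X: "y2 \<in> X" unfolding y2_def using TiX y .
  have "m x (m s y) = m x (m y2 s)" unfolding y2_def by (simp add: rd1)
  also have "\<dots> = m (m x y2) s" using x y2X by (rule form3)
  also have "\<dots> = m s (ld s (m (m x y2) s))" by (simp add: ld1)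
  also have "\<dots> = m s (m (ld s (m x s)) (ld s (m y2 s)))" using Thom x y2X by simp
  also have "ld s (m y2 s) = y" unfolding y2_def by (simp add: rd1 ld2)
  also have "m s (m (ld s (m x s)) y) = m (m s (ld s (m x s))) y" using form1 TX x y by simp
  also have "\<dots> = m (m x s) y" by (simp add: ld1)
  finally show ?thesis .
qed

lemma semi_hom:
  assumes phX: "\<And>x. x \<in> X \<Longrightarrow> ph x \<in> X" and phe: "ph e = e"
    and semi: "\<And>v w. ph (m v (m w v)) = m (m (ph v) (ph w)) (ph v)"
    and x: "x \<in> X" and y: "y \<in> X"
  shows "ph (m x y) = m (ph x) (ph y)"
proof -
  obtain u where u: "u \<in> X" "m u u = x" using sq x by blast
  have sqh: "ph (m u u) = m (ph u) (ph u)" using semi[of u e] phe by (simp add: lid rid)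
  have "m x y = m u (m y u)" using u y assoc comm by (metis)
  then have "ph (m x y) = m (m (ph u) (ph y)) (ph u)" using semi by simp
  also have "\<dots> = m (ph u) (m (ph y) (ph u))" using assoc phX u y by simp
  also have "\<dots> = m (ph u) (m (ph u) (ph y))" using comm phX u y by simp
  also have "\<dots> = m (m (ph u) (ph u)) (ph y)" using assoc phX u y by simp
  also have "\<dots> = m (ph x) (ph y)" using sqh u by simp
  finally show ?thesis .
qed

lemma lamX: "x \<in> X \<Longrightarrow> lam a u x \<in> X"
proof -
  assume x: "x \<in> X"
  have "f (m a u) = f (m a (m u x))" using f_mX[OF x, of u] by (simp add: fhom)
  then show ?thesis unfolding lam_def by (rule cosetX)
qed
lemma muX: "x \<in> X \<Longrightarrow> mu q p x \<in> X"
proof -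
  assume x: "x \<in> X"
  have "f (m p q) = f (m (m p x) q)" using f_mX[OF x, of p] by (simp add: fhom)
  then show ?thesis unfolding mu_def by (rule cosetX)
qed

lemma lam_hom: "x \<in> X \<Longrightarrow> y \<in> X \<Longrightarrow> lam a u (m x y) = m (lam a u x) (lam a u y)"
  by (rule semi_hom[OF lamX lam_e lam_semi])
lemma mu_hom: "x \<in> X \<Longrightarrow> y \<in> X \<Longrightarrow> mu q p (m x y) = m (mu q p x) (mu q p y)"
  by (rule semi_hom[OF muX mu_e mu_semi])

end



context mset begin

lemma lam_unfold: "m (m a u) (lam a u x) = m a (m u x)" unfolding lam_def by (rule ld1)
lemma mu_unfold: "m (m p q) (mu q p x) = m (m p x) q" unfolding mu_def by (rule ld1)
lemma phi_unfold: "m (m p x) (phi p x v) = m p (m x v)" unfolding phi_def by (rule ld1)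

lemma lam_coset:
  assumes fu: "f u = f u'" and x: "x \<in> X"
  shows "lam a u' x = lam a u x"
proof -
  obtain z where z: "z \<in> X" "u' = m u z" using cosetX'[OF fu] by blast
  have "m a (m u' x) = m a (m u (m z x))" using z x form1 by simp
  also have "\<dots> = m (m a u) (lam a u (m z x))" by (simp add: lam_unfold)
  also have "\<dots> = m (m a u) (m (lam a u z) (lam a u x))" using lam_hom z x by simp
  finally have 1: "m a (m u' x) = m (m a u) (m (lam a u z) (lam a u x))" .
  have "m a (m u' x) = m (m a u') (lam a u' x)" by (simp add: lam_unfold)
  also have "m a u' = m (m a u) (lam a u z)" using z by (simp add: lam_unfold rid)
  also have "m (m (m a u) (lam a u z)) (lam a u' x) = m (m a u) (m (lam a u z) (lam a u' x))"
    using form1 lamX z x by simp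
  finally have 2: "m a (m u' x) = m (m a u) (m (lam a u z) (lam a u' x))" .
  from 1 2 have "m (lam a u z) (lam a u' x) = m (lam a u z) (lam a u x)" using lcancel by metis
  then show ?thesis using lcancel by blast
qed

lemma phi_shift:
  assumes x: "x \<in> X" and y: "y \<in> X"
  shows "phi p x (m v y) = m (phi p x v) y"
proof -
  define w where "w = rd v x"
  have "m (m w y) x = m w (m y x)" using form1 x y by simp
  also have "\<dots> = m w (m x y)" using comm x y by simp
  also have "\<dots> = m (m w x) y" using form1 x y by simp
  also have "\<dots> = m v y" unfolding w_def by (simp add: rd1)
  finally have a: "rd (m v y) x = m w y" by (metis rd2)
  define T0 where "T0 = m (m p w) x"
  define s where "s = ld p T0"
  have phiv: "phi p x v = s" unfolding phi_eq s_def T0_def w_def ..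
  have ly: "lam p w y \<in> X" using lamX y .
  have "m (m p (m w y)) x = m (m (m p w) (lam p w y)) x" by (simp add: lam_unfold)
  also have "\<dots> = m (m p w) (m (lam p w y) x)" using form1 ly x by simp
  also have "\<dots> = m (m p w) (m x (lam p w y))" using comm ly x by simp
  also have "\<dots> = m T0 (lam p w y)" unfolding T0_def using form1 ly x by simp
  finally have b: "m (m p (m w y)) x = m T0 (lam p w y)" .
  have T0s: "T0 = m p s" unfolding s_def by (simp add: ld1)
  have "m' (f p) (f s) = m' (f p) (f w)"
    using T0s f_mX[OF x, of "m p w"] unfolding T0_def by (simp add: fhom)
  then have fsw: "f w = f s" using Llcancel fL by metis
  have "m p (m s y) = m (m p s) (lam p s y)" by (simp add: lam_unfold)
  also have "lam p s y = lam p w y" using lam_coset[OF fsw y] .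
  finally have c: "m p (m s y) = m T0 (lam p w y)" using T0s by simp
  have "phi p x (m v y) = ld p (m (m p (m w y)) x)" unfolding phi_eq a ..
  also have "\<dots> = ld p (m p (m s y))" using b c by simp
  also have "\<dots> = m s y" by (rule ld2)
  finally show ?thesis using phiv by simp
qed

lemma key:
  assumes x: "x \<in> X" and y: "y \<in> X"
  shows "m (m p x) (m q y) = m (m p q) (m (mu q p x) (lam p q y))"
proof -
  define v where "v = ld x (ld p (m (m p x) q))"
  have mxv: "m x v = ld p (m (m p x) q)" unfolding v_def by (rule ld1)
  have phiv: "phi p x v = q" unfolding phi_def mxv by (simp add: ld1 ld2)
  have phivy: "phi p x (m v y) = m q y" using phi_shift[OF x y] phiv by simp
  have fq: "f (m x v) = f q"
  proof -
    have "f (m x v) = f v" using f_Xm[OF x] .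
    moreover have "f (phi p x v) = f v"
      unfolding phi_def f_ld_eq using fhom[of p "m x v"] f_Xm[OF x, of v] f_mX[OF x, of p] by simp
    ultimately show ?thesis using phiv by simp
  qed
  have "m (m p x) (m q y) = m (m p x) (phi p x (m v y))" using phivy by simp
  also have "\<dots> = m p (m x (m v y))" by (rule phi_unfold)
  also have "\<dots> = m p (m (m x v) y)" using form2 x y by simp
  also have "\<dots> = m (m p (m x v)) (lam p (m x v) y)" by (simp add: lam_unfold)
  also have "m p (m x v) = m (m p x) q" using phi_unfold[of p x v] phiv by simp
  also have "lam p (m x v) y = lam p q y" using lam_coset[OF fq[symmetric] y] .
  also have "m (m (m p x) q) (lam p q y) = m (m (m p q) (mu q p x)) (lam p q y)"
    by (simp add: mu_unfold)
  also have "\<dots> = m (m p q) (m (mu q p x) (lam p q y))" using form1 muX lamX x y by simp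
  finally show ?thesis .
qed

definition laminv where "laminv p r z = ld r (ld p (m (m p r) z))"
definition muinv where "muinv p r z = ld r (rd (m (m r p) z) p)"

lemma lam_laminv: "lam p r (laminv p r z) = z" unfolding lam_def laminv_def by (simp add: ld1 ld2)
lemma laminv_lam: "laminv p r (lam p r w) = w" unfolding lam_def laminv_def by (simp add: ld1 ld2)
lemma mu_muinv: "mu p r (muinv p r z) = z" unfolding mu_def muinv_def by (simp add: ld1 rd1 ld2)
lemma muinv_mu: "muinv p r (mu p r w) = w" unfolding mu_def muinv_def by (simp add: ld1 rd2 ld2)

lemma laminvX: assumes z: "z \<in> X" shows "laminv p r z \<in> X"
proof -
  have "f (m (m p r) z) = m' (f p) (f r)" using f_mX[OF z, of "m p r"] fhom[of p r] by simp
  then have "f (ld p (m (m p r) z)) = f r" unfolding f_ld_eq .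
  then have "f (ld r (ld p (m (m p r) z))) = f e" by (subst f_ld_eq) (simp add: fe Lrid[OF fL])
  then show ?thesis using memX fe unfolding laminv_def by simp
qed

lemma muinvX: assumes z: "z \<in> X" shows "muinv p r z \<in> X"
proof -
  have "f (m (m r p) z) = m' (f r) (f p)" using f_mX[OF z, of "m r p"] fhom[of r p] by simp
  then have "f (rd (m (m r p) z) p) = f r" unfolding f_rd_eq .
  then have "f (ld r (rd (m (m r p) z) p)) = f e" by (subst f_ld_eq) (simp add: fe Lrid[OF fL])
  then show ?thesis using memX fe unfolding muinv_def by simp
qed

end



context mset begin

lemma inv_hom:
  assumes ph: "\<And>a b. a \<in> X \<Longrightarrow> b \<in> X \<Longrightarrow> ph (m a b) = m (ph a) (ph b)"
    and psX: "\<And>z. z \<in> X \<Longrightarrow> ps z \<in> X"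
    and php: "\<And>z. ph (ps z) = z" and pph: "\<And>w. ps (ph w) = w"
    and z1: "z1 \<in> X" and z2: "z2 \<in> X"
  shows "ps (m z1 z2) = m (ps z1) (ps z2)"
proof -
  have "ps (m z1 z2) = ps (m (ph (ps z1)) (ph (ps z2)))" using php by simp
  also have "\<dots> = ps (ph (m (ps z1) (ps z2)))" using ph psX z1 z2 by simp
  also have "\<dots> = m (ps z1) (ps z2)" by (rule pph)
  finally show ?thesis .
qed

lemma laminv_hom: "z1 \<in> X \<Longrightarrow> z2 \<in> X \<Longrightarrow> laminv p r (m z1 z2) = m (laminv p r z1) (laminv p r z2)"
  by (rule inv_hom[OF lam_hom laminvX lam_laminv laminv_lam])
lemma muinv_hom: "z1 \<in> X \<Longrightarrow> z2 \<in> X \<Longrightarrow> muinv p r (m z1 z2) = m (muinv p r z1) (muinv p r z2)"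
  by (rule inv_hom[OF mu_hom muinvX mu_muinv muinv_mu])

lemma ld_hom:
  assumes "a1 \<in> X" "a2 \<in> X" "b1 \<in> X" "b2 \<in> X"
  shows "ld (m a1 a2) (m b1 b2) = m (ld a1 b1) (ld a2 b2)"
proof -
  have "m (m a1 a2) (m (ld a1 b1) (ld a2 b2)) = m (m a1 (ld a1 b1)) (m a2 (ld a2 b2))"
    using swap4 ldX assms by simp
  also have "\<dots> = m b1 b2" by (simp add: ld1)
  finally show ?thesis by (metis ld2)
qed

definition good :: "'v lterm \<Rightarrow> bool" where
  "good t \<longleftrightarrow> (\<forall>\<sigma>. \<exists>D. (\<forall>\<tau>. (\<forall>v. \<tau> v \<in> X) \<longrightarrow>
        D \<tau> \<in> X \<and> leval m e (\<lambda>v. m (\<sigma> v) (\<tau> v)) t = m (leval m e \<sigma> t) (D \<tau>))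
     \<and> (\<forall>\<tau>1 \<tau>2. (\<forall>v. \<tau>1 v \<in> X) \<longrightarrow> (\<forall>v. \<tau>2 v \<in> X) \<longrightarrow>
          D (\<lambda>v. m (\<tau>1 v) (\<tau>2 v)) = m (D \<tau>1) (D \<tau>2)))"

lemma allX_m: "(\<forall>v. \<tau>1 v \<in> X) \<Longrightarrow> (\<forall>v. \<tau>2 v \<in> X) \<Longrightarrow> (\<forall>v. m (\<tau>1 v) (\<tau>2 v) \<in> X)"
  using mX by blast

lemma all_good: "good (t :: 'v lterm)"
proof (induction t)
  case (LVar x)
  show ?case unfolding good_def by (intro allI exI[of _ "\<lambda>\<tau>. \<tau> x"]) simp
next
  case LOne
  show ?case unfolding good_def by (intro allI exI[of _ "\<lambda>\<tau>. e"]) (simp add: rid eX)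
next
  case (LMul u w)
  show ?case unfolding good_def
  proof (intro allI)
    fix \<sigma> :: "'v \<Rightarrow> 'a"
    obtain DU where DU: "\<forall>\<tau>. (\<forall>v. \<tau> v \<in> X) \<longrightarrow>
        DU \<tau> \<in> X \<and> leval m e (\<lambda>v. m (\<sigma> v) (\<tau> v)) u = m (leval m e \<sigma> u) (DU \<tau>)"
      "\<forall>\<tau>1 \<tau>2. (\<forall>v. \<tau>1 v \<in> X) \<longrightarrow> (\<forall>v. \<tau>2 v \<in> X) \<longrightarrow>
          DU (\<lambda>v. m (\<tau>1 v) (\<tau>2 v)) = m (DU \<tau>1) (DU \<tau>2)"
      using LMul.IH(1) unfolding good_def by blast
    obtain DW where DW: "\<forall>\<tau>. (\<forall>v. \<tau> v \<in> X) \<longrightarrow>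
        DW \<tau> \<in> X \<and> leval m e (\<lambda>v. m (\<sigma> v) (\<tau> v)) w = m (leval m e \<sigma> w) (DW \<tau>)"
      "\<forall>\<tau>1 \<tau>2. (\<forall>v. \<tau>1 v \<in> X) \<longrightarrow> (\<forall>v. \<tau>2 v \<in> X) \<longrightarrow>
          DW (\<lambda>v. m (\<tau>1 v) (\<tau>2 v)) = m (DW \<tau>1) (DW \<tau>2)"
      using LMul.IH(2) unfolding good_def by blast
    define p where "p = leval m e \<sigma> u"
    define q where "q = leval m e \<sigma> w"
    define D where "D \<tau> = m (mu q p (DU \<tau>)) (lam p q (DW \<tau>))" for \<tau>
    show "\<exists>D. (\<forall>\<tau>. (\<forall>v. \<tau> v \<in> X) \<longrightarrow>
        D \<tau> \<in> X \<and> leval m e (\<lambda>v. m (\<sigma> v) (\<tau> v)) (LMul u w) = m (leval m e \<sigma> (LMul u w)) (D \<tau>))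
     \<and> (\<forall>\<tau>1 \<tau>2. (\<forall>v. \<tau>1 v \<in> X) \<longrightarrow> (\<forall>v. \<tau>2 v \<in> X) \<longrightarrow>
          D (\<lambda>v. m (\<tau>1 v) (\<tau>2 v)) = m (D \<tau>1) (D \<tau>2))"
    proof (intro exI conjI allI impI)
      fix \<tau> :: "'v \<Rightarrow> 'a" assume t: "\<forall>v. \<tau> v \<in> X"
      have U: "DU \<tau> \<in> X" "leval m e (\<lambda>v. m (\<sigma> v) (\<tau> v)) u = m p (DU \<tau>)"
        using DU(1) t unfolding p_def by auto
      have W: "DW \<tau> \<in> X" "leval m e (\<lambda>v. m (\<sigma> v) (\<tau> v)) w = m q (DW \<tau>)"
        using DW(1) t unfolding q_def by auto
      show "D \<tau> \<in> X" unfolding D_def using U W muX lamX mX by simp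
      show "leval m e (\<lambda>v. m (\<sigma> v) (\<tau> v)) (LMul u w) = m (leval m e \<sigma> (LMul u w)) (D \<tau>)"
        using U W key unfolding D_def p_def q_def by simp
    next
      fix \<tau>1 \<tau>2 :: "'v \<Rightarrow> 'a" assume t1: "\<forall>v. \<tau>1 v \<in> X" and t2: "\<forall>v. \<tau>2 v \<in> X"
      have X1: "DU \<tau>1 \<in> X" "DW \<tau>1 \<in> X" using DU(1) DW(1) t1 by auto
      have X2: "DU \<tau>2 \<in> X" "DW \<tau>2 \<in> X" using DU(1) DW(1) t2 by auto
      have "D (\<lambda>v. m (\<tau>1 v) (\<tau>2 v)) = m (mu q p (m (DU \<tau>1) (DU \<tau>2))) (lam p q (m (DW \<tau>1) (DW \<tau>2)))"
        unfolding D_def using DU(2) DW(2) t1 t2 by simp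
      also have "\<dots> = m (m (mu q p (DU \<tau>1)) (mu q p (DU \<tau>2))) (m (lam p q (DW \<tau>1)) (lam p q (DW \<tau>2)))"
        using mu_hom lam_hom X1 X2 by simp
      also have "\<dots> = m (D \<tau>1) (D \<tau>2)" unfolding D_def using swap4 muX lamX X1 X2 by simp
      finally show "D (\<lambda>v. m (\<tau>1 v) (\<tau>2 v)) = m (D \<tau>1) (D \<tau>2)" .
    qed
  qed
next
  case (LLdiv u w)
  show ?case unfolding good_def
  proof (intro allI)
    fix \<sigma> :: "'v \<Rightarrow> 'a"
    obtain DU where DU: "\<forall>\<tau>. (\<forall>v. \<tau> v \<in> X) \<longrightarrow>
        DU \<tau> \<in> X \<and> leval m e (\<lambda>v. m (\<sigma> v) (\<tau> v)) u = m (leval m e \<sigma> u) (DU \<tau>)"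
      "\<forall>\<tau>1 \<tau>2. (\<forall>v. \<tau>1 v \<in> X) \<longrightarrow> (\<forall>v. \<tau>2 v \<in> X) \<longrightarrow>
          DU (\<lambda>v. m (\<tau>1 v) (\<tau>2 v)) = m (DU \<tau>1) (DU \<tau>2)"
      using LLdiv.IH(1) unfolding good_def by blast
    obtain DW where DW: "\<forall>\<tau>. (\<forall>v. \<tau> v \<in> X) \<longrightarrow>
        DW \<tau> \<in> X \<and> leval m e (\<lambda>v. m (\<sigma> v) (\<tau> v)) w = m (leval m e \<sigma> w) (DW \<tau>)"
      "\<forall>\<tau>1 \<tau>2. (\<forall>v. \<tau>1 v \<in> X) \<longrightarrow> (\<forall>v. \<tau>2 v \<in> X) \<longrightarrow>
          DW (\<lambda>v. m (\<tau>1 v) (\<tau>2 v)) = m (DW \<tau>1) (DW \<tau>2)"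
      using LLdiv.IH(2) unfolding good_def by blast
    define p where "p = leval m e \<sigma> u"
    define q where "q = leval m e \<sigma> w"
    define r where "r = ld p q"
    define D where "D \<tau> = laminv p r (ld (mu r p (DU \<tau>)) (DW \<tau>))" for \<tau>
    show "\<exists>D. (\<forall>\<tau>. (\<forall>v. \<tau> v \<in> X) \<longrightarrow>
        D \<tau> \<in> X \<and> leval m e (\<lambda>v. m (\<sigma> v) (\<tau> v)) (LLdiv u w) = m (leval m e \<sigma> (LLdiv u w)) (D \<tau>))
     \<and> (\<forall>\<tau>1 \<tau>2. (\<forall>v. \<tau>1 v \<in> X) \<longrightarrow> (\<forall>v. \<tau>2 v \<in> X) \<longrightarrow>
          D (\<lambda>v. m (\<tau>1 v) (\<tau>2 v)) = m (D \<tau>1) (D \<tau>2))"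
    proof (intro exI conjI allI impI)
      fix \<tau> :: "'v \<Rightarrow> 'a" assume t: "\<forall>v. \<tau> v \<in> X"
      have U: "DU \<tau> \<in> X" "leval m e (\<lambda>v. m (\<sigma> v) (\<tau> v)) u = m p (DU \<tau>)"
        using DU(1) t unfolding p_def by auto
      have W: "DW \<tau> \<in> X" "leval m e (\<lambda>v. m (\<sigma> v) (\<tau> v)) w = m q (DW \<tau>)"
        using DW(1) t unfolding q_def by auto
      have zX: "ld (mu r p (DU \<tau>)) (DW \<tau>) \<in> X" using ldX muX U W by simp
      show DX: "D \<tau> \<in> X" unfolding D_def using laminvX zX .
      have "m (m p (DU \<tau>)) (m r (D \<tau>)) = m (m p r) (m (mu r p (DU \<tau>)) (lam p r (D \<tau>)))"
        using key U DX by simp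
      also have "\<dots> = m q (DW \<tau>)" unfolding D_def r_def lam_laminv by (simp add: ld1)
      finally have "m (m p (DU \<tau>)) (m r (D \<tau>)) = m q (DW \<tau>)" .
      then have "ld (m p (DU \<tau>)) (m q (DW \<tau>)) = m r (D \<tau>)" by (metis ld2)
      then show "leval m e (\<lambda>v. m (\<sigma> v) (\<tau> v)) (LLdiv u w) = m (leval m e \<sigma> (LLdiv u w)) (D \<tau>)"
        using U W unfolding r_def p_def q_def by simp
    next
      fix \<tau>1 \<tau>2 :: "'v \<Rightarrow> 'a" assume t1: "\<forall>v. \<tau>1 v \<in> X" and t2: "\<forall>v. \<tau>2 v \<in> X"
      have X1: "DU \<tau>1 \<in> X" "DW \<tau>1 \<in> X" using DU(1) DW(1) t1 by auto
      have X2: "DU \<tau>2 \<in> X" "DW \<tau>2 \<in> X" using DU(1) DW(1) t2 by auto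
      have "D (\<lambda>v. m (\<tau>1 v) (\<tau>2 v)) = laminv p r (ld (mu r p (m (DU \<tau>1) (DU \<tau>2))) (m (DW \<tau>1) (DW \<tau>2)))"
        unfolding D_def using DU(2) DW(2) t1 t2 by simp
      also have "\<dots> = laminv p r (ld (m (mu r p (DU \<tau>1)) (mu r p (DU \<tau>2))) (m (DW \<tau>1) (DW \<tau>2)))"
        using mu_hom X1 X2 by simp
      also have "\<dots> = laminv p r (m (ld (mu r p (DU \<tau>1)) (DW \<tau>1)) (ld (mu r p (DU \<tau>2)) (DW \<tau>2)))"
        using ld_hom muX X1 X2 by simp
      also have "\<dots> = m (D \<tau>1) (D \<tau>2)" unfolding D_def using laminv_hom ldX muX X1 X2 by simp
      finally show "D (\<lambda>v. m (\<tau>1 v) (\<tau>2 v)) = m (D \<tau>1) (D \<tau>2)" .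
    qed
  qed
next
  case (LRdiv u w)
  show ?case unfolding good_def
  proof (intro allI)
    fix \<sigma> :: "'v \<Rightarrow> 'a"
    obtain DU where DU: "\<forall>\<tau>. (\<forall>v. \<tau> v \<in> X) \<longrightarrow>
        DU \<tau> \<in> X \<and> leval m e (\<lambda>v. m (\<sigma> v) (\<tau> v)) u = m (leval m e \<sigma> u) (DU \<tau>)"
      "\<forall>\<tau>1 \<tau>2. (\<forall>v. \<tau>1 v \<in> X) \<longrightarrow> (\<forall>v. \<tau>2 v \<in> X) \<longrightarrow>
          DU (\<lambda>v. m (\<tau>1 v) (\<tau>2 v)) = m (DU \<tau>1) (DU \<tau>2)"
      using LRdiv.IH(1) unfolding good_def by blast
    obtain DW where DW: "\<forall>\<tau>. (\<forall>v. \<tau> v \<in> X) \<longrightarrow>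
        DW \<tau> \<in> X \<and> leval m e (\<lambda>v. m (\<sigma> v) (\<tau> v)) w = m (leval m e \<sigma> w) (DW \<tau>)"
      "\<forall>\<tau>1 \<tau>2. (\<forall>v. \<tau>1 v \<in> X) \<longrightarrow> (\<forall>v. \<tau>2 v \<in> X) \<longrightarrow>
          DW (\<lambda>v. m (\<tau>1 v) (\<tau>2 v)) = m (DW \<tau>1) (DW \<tau>2)"
      using LRdiv.IH(2) unfolding good_def by blast
    define q where "q = leval m e \<sigma> u"
    define p where "p = leval m e \<sigma> w"
    define r where "r = rd q p"
    define D where "D \<tau> = muinv p r (ld (lam r p (DW \<tau>)) (DU \<tau>))" for \<tau>
    show "\<exists>D. (\<forall>\<tau>. (\<forall>v. \<tau> v \<in> X) \<longrightarrow>
        D \<tau> \<in> X \<and> leval m e (\<lambda>v. m (\<sigma> v) (\<tau> v)) (LRdiv u w) = m (leval m e \<sigma> (LRdiv u w)) (D \<tau>))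
     \<and> (\<forall>\<tau>1 \<tau>2. (\<forall>v. \<tau>1 v \<in> X) \<longrightarrow> (\<forall>v. \<tau>2 v \<in> X) \<longrightarrow>
          D (\<lambda>v. m (\<tau>1 v) (\<tau>2 v)) = m (D \<tau>1) (D \<tau>2))"
    proof (intro exI conjI allI impI)
      fix \<tau> :: "'v \<Rightarrow> 'a" assume t: "\<forall>v. \<tau> v \<in> X"
      have U: "DU \<tau> \<in> X" "leval m e (\<lambda>v. m (\<sigma> v) (\<tau> v)) u = m q (DU \<tau>)"
        using DU(1) t unfolding q_def by auto
      have W: "DW \<tau> \<in> X" "leval m e (\<lambda>v. m (\<sigma> v) (\<tau> v)) w = m p (DW \<tau>)"
        using DW(1) t unfolding p_def by auto
      have lX: "lam r p (DW \<tau>) \<in> X" using lamX W by simp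
      have zX: "ld (lam r p (DW \<tau>)) (DU \<tau>) \<in> X" using ldX lX U by simp
      show DX: "D \<tau> \<in> X" unfolding D_def using muinvX zX .
      have "m (m r (D \<tau>)) (m p (DW \<tau>)) = m (m r p) (m (mu p r (D \<tau>)) (lam r p (DW \<tau>)))"
        using key W DX by simp
      also have "\<dots> = m q (m (ld (lam r p (DW \<tau>)) (DU \<tau>)) (lam r p (DW \<tau>)))"
        unfolding D_def r_def mu_muinv by (simp add: rd1)
      also have "m (ld (lam r p (DW \<tau>)) (DU \<tau>)) (lam r p (DW \<tau>)) = DU \<tau>"
        using comm[OF zX lX] by (simp add: ld1)
      finally have "m (m r (D \<tau>)) (m p (DW \<tau>)) = m q (DU \<tau>)" .
      then have "rd (m q (DU \<tau>)) (m p (DW \<tau>)) = m r (D \<tau>)" by (metis rd2)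
      then show "leval m e (\<lambda>v. m (\<sigma> v) (\<tau> v)) (LRdiv u w) = m (leval m e \<sigma> (LRdiv u w)) (D \<tau>)"
        using U W unfolding r_def p_def q_def by simp
    next
      fix \<tau>1 \<tau>2 :: "'v \<Rightarrow> 'a" assume t1: "\<forall>v. \<tau>1 v \<in> X" and t2: "\<forall>v. \<tau>2 v \<in> X"
      have X1: "DU \<tau>1 \<in> X" "DW \<tau>1 \<in> X" using DU(1) DW(1) t1 by auto
      have X2: "DU \<tau>2 \<in> X" "DW \<tau>2 \<in> X" using DU(1) DW(1) t2 by auto
      have "D (\<lambda>v. m (\<tau>1 v) (\<tau>2 v)) = muinv p r (ld (lam r p (m (DW \<tau>1) (DW \<tau>2))) (m (DU \<tau>1) (DU \<tau>2)))"
        unfolding D_def using DU(2) DW(2) t1 t2 by simp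
      also have "\<dots> = muinv p r (ld (m (lam r p (DW \<tau>1)) (lam r p (DW \<tau>2))) (m (DU \<tau>1) (DU \<tau>2)))"
        using lam_hom X1 X2 by simp
      also have "\<dots> = muinv p r (m (ld (lam r p (DW \<tau>1)) (DU \<tau>1)) (ld (lam r p (DW \<tau>2)) (DU \<tau>2)))"
        using ld_hom lamX X1 X2 by simp
      also have "\<dots> = m (D \<tau>1) (D \<tau>2)" unfolding D_def using muinv_hom ldX lamX X1 X2 by simp
      finally show "D (\<lambda>v. m (\<tau>1 v) (\<tau>2 v)) = m (D \<tau>1) (D \<tau>2)" .
    qed
  qed
qed

end



context mset begin

lemma abelian: "abelian_cong m e (induced_cong m X)"
  unfolding abelian_cong_def
proof (intro allI impI)
  fix t :: "(nat + nat) lterm" and a b c d :: "nat \<Rightarrow> 'a"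
  assume hab: "\<forall>i. (a i, b i) \<in> induced_cong m X" and hcd: "\<forall>i. (c i, d i) \<in> induced_cong m X"
    and heq: "leval m e (case_sum a c) t = leval m e (case_sum a d) t"
  have "\<forall>i. \<exists>x. x \<in> X \<and> b i = m (a i) x" using hab unfolding induced_cong_def by blast
  then obtain xf where xf: "\<forall>i. xf i \<in> X \<and> b i = m (a i) (xf i)" by (metis choice)
  have "\<forall>i. \<exists>x. x \<in> X \<and> d i = m (c i) x" using hcd unfolding induced_cong_def by blast
  then obtain yf where yf: "\<forall>i. yf i \<in> X \<and> d i = m (c i) (yf i)" by (metis choice)
  define \<sigma> where "\<sigma> = case_sum a c"
  define \<tau>1 :: "nat + nat \<Rightarrow> 'a" where "\<tau>1 = case_sum xf (\<lambda>_. e)"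
  define \<tau>2 :: "nat + nat \<Rightarrow> 'a" where "\<tau>2 = case_sum (\<lambda>_. e) yf"
  have t1X: "\<forall>v. \<tau>1 v \<in> X" unfolding \<tau>1_def using xf eX by (simp split: sum.split)
  have t2X: "\<forall>v. \<tau>2 v \<in> X" unfolding \<tau>2_def using yf eX by (simp split: sum.split)
  have e1: "(\<lambda>v. m (\<sigma> v) (\<tau>1 v)) = case_sum b c"
    unfolding \<sigma>_def \<tau>1_def using xf by (auto simp: rid split: sum.split)
  have e2: "(\<lambda>v. m (\<sigma> v) (\<tau>2 v)) = case_sum a d"
    unfolding \<sigma>_def \<tau>2_def using yf by (auto simp: rid split: sum.split)
  have e12: "(\<lambda>v. m (\<sigma> v) (m (\<tau>1 v) (\<tau>2 v))) = case_sum b d"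
    unfolding \<sigma>_def \<tau>1_def \<tau>2_def using xf yf by (auto simp: rid lid split: sum.split)
  obtain D where D1: "\<forall>\<tau>. (\<forall>v. \<tau> v \<in> X) \<longrightarrow>
        D \<tau> \<in> X \<and> leval m e (\<lambda>v. m (\<sigma> v) (\<tau> v)) t = m (leval m e \<sigma> t) (D \<tau>)"
    and D2: "\<forall>\<tau>1 \<tau>2. (\<forall>v. \<tau>1 v \<in> X) \<longrightarrow> (\<forall>v. \<tau>2 v \<in> X) \<longrightarrow>
          D (\<lambda>v. m (\<tau>1 v) (\<tau>2 v)) = m (D \<tau>1) (D \<tau>2)"
    using all_good[of t] unfolding good_def by blast
  define P where "P = leval m e \<sigma> t"
  have l1: "leval m e (case_sum b c) t = m P (D \<tau>1)" using D1 t1X e1 unfolding P_def by metis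
  have l2: "leval m e (case_sum a d) t = m P (D \<tau>2)" using D1 t2X e2 unfolding P_def by metis
  have l12: "leval m e (case_sum b d) t = m P (D (\<lambda>v. m (\<tau>1 v) (\<tau>2 v)))"
    using D1 allX_m[OF t1X t2X] e12 unfolding P_def by metis
  have "m P e = m P (D \<tau>2)" using heq l2 unfolding P_def \<sigma>_def by (simp add: rid)
  then have d2: "D \<tau>2 = e" using lcancel by metis
  have "D (\<lambda>v. m (\<tau>1 v) (\<tau>2 v)) = D \<tau>1" using D2 t1X t2X d2 by (simp add: rid)
  then show "leval m e (case_sum b c) t = leval m e (case_sum b d) t" using l1 l12 by simp
qed

end

theorem theorem4p3:
  fixes m :: "'a \<Rightarrow> 'a \<Rightarrow> 'a" and e :: 'a and X :: "'a set"
  assumes "moufang m e"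
    and "divisible m e 3"
    and "normal_subloop m e X"
    and "comm_group_sub m X"
    and "divisible_on m e X 2"
  shows "abelian_cong m e (induced_cong m X)"
proof -
  obtain L :: "'a set" and m' :: "'a \<Rightarrow> 'a \<Rightarrow> 'a" and e' :: 'a and f :: "'a \<Rightarrow> 'a" where h: "is_loop_on L m' e'" "\<forall>x. f x \<in> L"
    "\<forall>x y. f (m x y) = m' (f x) (f y)" "X = {x. f x = e'}"
    using assms(3) unfolding normal_subloop_def by blast
  interpret mset m e X L m' e' f
    using assms h by unfold_locales auto
  show ?thesis by (rule abelian)
qed



end
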